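(* Let $t_0>0$ and $u\in\mathrm{W}^{2,p}_0([0,t_0],\operatorname{rg}(P^e_-))$. Then the function $x:[0,t_0]\to X^e$, $x(t)(r):=\hat u(t-r)$ ($r\in\mathbb{R}_+$, $\hat u$ the extension of $u$ by $0$ to $\mathbb{R}$), is a classical solution of the boundary control system \[ \dot x(t)=A_m^e x(t),\quad L^e x(t)=u(t)\quad (0\le t\le t_0),\qquad x(0)=0. \]
   Context: Fix $p\in[1,\infty)$, $\ell\in\mathbb{N}$, $X^e=\mathrm{L}^p(\mathbb{R}_+,\mathbb{C}^\ell)$ with $\mathbb{R}_+=[0,\infty)$. $P^e_+,P^e_-\in\mathrm{M}_\ell(\mathbb{C})$ are complementary diagonal coordinate projections ($P^e_++P^e_-=\mathrm{Id}$). $A_m^e f=(P^e_+-P^e_-)f'$ with $D(A_m^e)=\mathrm{W}^{1,p}(\mathbb{R}_+,\mathbb{C}^\ell)$, and $L^e:D(A^e_m)\to\operatorname{rg}(P^e_-)$, $L^ef=P^e_-f(0)$. A classical solution is a function $x\in\mathrm{C}^1([0,t_0],X^e)$ with $x(t)\in D(A^e_m)$ for all $t$, $t\mapsto A^e_mx(t)$ continuous, satisfying the stated equations. *)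

theory Defs
  imports "HOL-Analysis.Analysis"
begin

definition Lp_integral :: "real \<Rightarrow> real set \<Rightarrow> (real \<Rightarrow> 'a::real_normed_vector) \<Rightarrow> ennreal" where
  "Lp_integral p I f = nn_integral (lebesgue_on I) (\<lambda>r. ennreal (norm (f r) powr p))"

definition memLp :: "real \<Rightarrow> real set \<Rightarrow> (real \<Rightarrow> 'a::{real_normed_vector,second_countable_topology}) \<Rightarrow> bool" where
  "memLp p I f \<longleftrightarrow> f \<in> borel_measurable (lebesgue_on I) \<and> Lp_integral p I f < \<infinity>"

definition Lp_norm :: "real \<Rightarrow> real set \<Rightarrow> (real \<Rightarrow> 'a::real_normed_vector) \<Rightarrow> real" where
  "Lp_norm p I f = (enn2real (Lp_integral p I f)) powr (1 / p)"

definition smooth_fun :: "(real \<Rightarrow> real) \<Rightarrow> bool" where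
  "smooth_fun \<phi> \<longleftrightarrow> (\<forall>n x. ((deriv ^^ n) \<phi>) differentiable (at x))"

definition test_fun :: "real set \<Rightarrow> (real \<Rightarrow> real) \<Rightarrow> bool" where
  "test_fun I \<phi> \<longleftrightarrow> smooth_fun \<phi> \<and> compact (closure {r. \<phi> r \<noteq> 0}) \<and> closure {r. \<phi> r \<noteq> 0} \<subseteq> I"

definition vec_test_fun :: "real set \<Rightarrow> (real \<Rightarrow> complex^'l::finite) \<Rightarrow> bool" where
  "vec_test_fun I \<psi> \<longleftrightarrow> (\<forall>i. test_fun I (\<lambda>r. Re (\<psi> r $ i)) \<and> test_fun I (\<lambda>r. Im (\<psi> r $ i)))"

definition weak_deriv_on :: "real set \<Rightarrow> (real \<Rightarrow> complex^'l::finite) \<Rightarrow> (real \<Rightarrow> complex^'l) \<Rightarrow> bool" where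
  "weak_deriv_on I f g \<longleftrightarrow>
     (\<forall>\<phi>. test_fun I \<phi> \<longrightarrow>
        integral\<^sup>L (lebesgue_on I) (\<lambda>r. deriv \<phi> r *\<^sub>R f r)
          = - integral\<^sup>L (lebesgue_on I) (\<lambda>r. \<phi> r *\<^sub>R g r))"

definition W1p :: "real \<Rightarrow> real set \<Rightarrow> (real \<Rightarrow> complex^'l::finite) \<Rightarrow> (real \<Rightarrow> complex^'l) \<Rightarrow> bool" where
  "W1p p I f f1 \<longleftrightarrow> memLp p I f \<and> memLp p I f1 \<and> weak_deriv_on I f f1"

definition W2p :: "real \<Rightarrow> real set \<Rightarrow> (real \<Rightarrow> complex^'l::finite) \<Rightarrow> (real \<Rightarrow> complex^'l)
    \<Rightarrow> (real \<Rightarrow> complex^'l) \<Rightarrow> bool" where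
  "W2p p I f f1 f2 \<longleftrightarrow> memLp p I f \<and> memLp p I f1 \<and> memLp p I f2
     \<and> weak_deriv_on I f f1 \<and> weak_deriv_on I f1 f2"

text \<open>W^{2,p}_0(I,V): W^{2,p}-functions with values (a.e.) in V which are W^{2,p}-norm limits
  of V-valued test functions (closure of C_c^infinity(I,V) in W^{2,p}).\<close>
definition W2p0 :: "real \<Rightarrow> real set \<Rightarrow> (complex^'l::finite) set \<Rightarrow> (real \<Rightarrow> complex^'l) \<Rightarrow> bool" where
  "W2p0 p I V u \<longleftrightarrow>
     (AE t in lebesgue_on I. u t \<in> V) \<and>
     (\<exists>u1 u2. W2p p I u u1 u2 \<and>
        (\<exists>\<psi> \<psi>1 \<psi>2 :: nat \<Rightarrow> real \<Rightarrow> complex^'l.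
           (\<forall>n. vec_test_fun I (\<psi> n) \<and> (\<forall>r. \<psi> n r \<in> V) \<and> W2p p I (\<psi> n) (\<psi>1 n) (\<psi>2 n)) \<and>
           (\<lambda>n. Lp_norm p I (\<lambda>r. \<psi> n r - u r) + Lp_norm p I (\<lambda>r. \<psi>1 n r - u1 r)
                 + Lp_norm p I (\<lambda>r. \<psi>2 n r - u2 r)) \<longlonglongrightarrow> 0))"

text \<open>Boundary value at 0 of a W^{1,p}(R_+) function: value at 0 of its continuous representative.\<close>
definition trace0 :: "(real \<Rightarrow> complex^'l::finite) \<Rightarrow> complex^'l" where
  "trace0 f = (THE c. \<exists>h. continuous_on {0..} h \<and> (AE r in lebesgue_on {0<..}. f r = h r) \<and> h 0 = c)"

definition rg :: "complex^'l^'l \<Rightarrow> (complex^'l::finite) set" where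
  "rg P = {v. P *v v = v}"

definition ext0 :: "real \<Rightarrow> (real \<Rightarrow> 'a::zero) \<Rightarrow> real \<Rightarrow> 'a" where
  "ext0 t0 u s = (if s \<in> {0..t0} then u s else 0)"

text \<open>Classical solution x in C^1([0,t0], X^e), X^e = L^p(R_+, C^l), of
  x' = A_m x, L x = u, x(0)=0, with A_m f = (P+ - P-) f', D(A_m) = W^{1,p}, L f = P- f(0).\<close>
definition classical_solution ::
  "real \<Rightarrow> complex^'l^'l \<Rightarrow> complex^'l^'l \<Rightarrow> real \<Rightarrow> (real \<Rightarrow> complex^'l::finite)
     \<Rightarrow> (real \<Rightarrow> real \<Rightarrow> complex^'l) \<Rightarrow> bool" where
  "classical_solution p Pp Pm t0 u x \<longleftrightarrow>
     (\<exists>x' g :: real \<Rightarrow> real \<Rightarrow> complex^'l.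
        \<comment> \<open>x is C^1 from [0,t0] into X^e with derivative x'\<close>
        (\<forall>t\<in>{0..t0}. memLp p {0<..} (x t) \<and> memLp p {0<..} (x' t)) \<and>
        (\<forall>t\<in>{0..t0}. ((\<lambda>s. Lp_norm p {0<..} (\<lambda>r. x s r - x t r - (s - t) *\<^sub>R x' t r) / \<bar>s - t\<bar>)
                          \<longlongrightarrow> 0) (at t within {0..t0})) \<and>
        (\<forall>t\<in>{0..t0}. ((\<lambda>s. Lp_norm p {0<..} (\<lambda>r. x' s r - x' t r)) \<longlongrightarrow> 0) (at t within {0..t0})) \<and>
        \<comment> \<open>x(t) \<in> D(A_m) with weak derivative g t\<close>
        (\<forall>t\<in>{0..t0}. W1p p {0<..} (x t) (g t)) \<and>
        \<comment> \<open>t \<mapsto> A_m x(t) continuous\<close>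
        (\<forall>t\<in>{0..t0}. ((\<lambda>s. Lp_norm p {0<..} (\<lambda>r. (Pp - Pm) *v g s r - (Pp - Pm) *v g t r))
                          \<longlongrightarrow> 0) (at t within {0..t0})) \<and>
        \<comment> \<open>equations\<close>
        (\<forall>t\<in>{0..t0}. AE r in lebesgue_on {0<..}. x' t r = (Pp - Pm) *v g t r) \<and>
        (\<forall>t\<in>{0..t0}. Pm *v trace0 (x t) = u t) \<and>
        (AE r in lebesgue_on {0<..}. x 0 r = 0))"

end

theory Submission
  imports Defs
begin

definition Hk :: "nat \<Rightarrow> real \<Rightarrow> real" where
  "Hk k y = (if 0 < y then inverse y ^ k * exp (- inverse y) else 0)"

lemma Hk_tendsto0: "(Hk m \<longlongrightarrow> 0) (at 0)"
proof (rule filterlim_split_at)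
  show "(Hk m \<longlongrightarrow> 0) (at_left 0)"
  proof (rule tendsto_eventually)
    show "\<forall>\<^sub>F x in at_left (0::real). Hk m x = 0"
      unfolding eventually_at_left_field by (auto simp: Hk_def intro!: exI[of _ "-1"])
  qed
next
  have "((\<lambda>x. x ^ m / exp x) \<longlongrightarrow> (0::real)) at_top" by (rule tendsto_power_div_exp_0)
  then have "((\<lambda>x. inverse x ^ m / exp (inverse x)) \<longlongrightarrow> (0::real)) (at_right 0)"
    using filterlim_compose[OF _ filterlim_inverse_at_top_right] by blast
  then show "(Hk m \<longlongrightarrow> 0) (at_right 0)"
  proof (rule Lim_transform_eventually)
    show "\<forall>\<^sub>F x in at_right (0::real). inverse x ^ m / exp (inverse x) = Hk m x"
      unfolding eventually_at_right_field
      by (auto simp: Hk_def exp_minus field_simps intro!: exI[of _ 1])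
  qed
qed

lemma Hk_deriv: "(Hk k has_real_derivative (- real k * Hk (k+1) y + Hk (k+2) y)) (at y)"
proof (cases "y = 0")
  case True
  have eq: "(\<lambda>x. (Hk k x - Hk k 0) / (x - 0)) = Hk (k+1)"
    by (auto simp: Hk_def fun_eq_iff divide_inverse)
  have z: "- real k * Hk (k+1) 0 + Hk (k+2) 0 = 0" by (simp add: Hk_def)
  show ?thesis unfolding has_field_derivative_iff True z eq using Hk_tendsto0[of "k+1"] .
next
  case False
  show ?thesis
  proof (cases "y > 0")
    case True
    have d: "((\<lambda>x. inverse x ^ k * exp (- inverse x)) has_real_derivative
         (- real k * Hk (k+1) y + Hk (k+2) y)) (at y)"
    proof -
      have "((\<lambda>x. inverse x ^ k * exp (- inverse x)) has_real_derivative
         (real k * inverse y ^ (k - 1) * (- (inverse y * inverse y)) * exp (- inverse y)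
          + inverse y ^ k * (exp (- inverse y) * (inverse y * inverse y)))) (at y)"
        using True by (auto intro!: derivative_eq_intros)
      moreover have "real k * inverse y ^ (k - 1) * (- (inverse y * inverse y)) * exp (- inverse y)
          + inverse y ^ k * (exp (- inverse y) * (inverse y * inverse y)) = - real k * Hk (k+1) y + Hk (k+2) y"
        using True by (cases k) (auto simp: Hk_def power2_eq_square algebra_simps)
      ultimately show ?thesis by simp
    qed
    show ?thesis
      by (rule has_field_derivative_transform_within_open[OF d, of "{0<..}"]) (use True in \<open>auto simp: Hk_def\<close>)
  next
    case False
    with \<open>y \<noteq> 0\<close> have "y < 0" by simp
    have d: "((\<lambda>x. 0) has_real_derivative (- real k * Hk (k+1) y + Hk (k+2) y)) (at y)"
      using \<open>y < 0\<close> by (simp add: Hk_def)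
    show ?thesis
      by (rule has_field_derivative_transform_within_open[OF d, of "{..<0}"]) (use \<open>y<0\<close> in \<open>auto simp: Hk_def\<close>)
  qed
qed

inductive Cb :: "(real \<Rightarrow> real) \<Rightarrow> bool" where
  base: "Cb (\<lambda>y. Hk j y * Hk k (1 - y))"
| add: "Cb f \<Longrightarrow> Cb g \<Longrightarrow> Cb (\<lambda>y. f y + g y)"
| smult: "Cb f \<Longrightarrow> Cb (\<lambda>y. c * f y)"

lemma Cb_deriv: "Cb f \<Longrightarrow> \<exists>f'. (\<forall>x. (f has_real_derivative f' x) (at x)) \<and> Cb f'"
proof (induction rule: Cb.induct)
  case (base j k)
  let ?f' = "\<lambda>y. (- real j * Hk (j+1) y + Hk (j+2) y) * Hk k (1 - y)
      + Hk j y * ((- real k * Hk (k+1) (1-y) + Hk (k+2) (1-y)) * (-1))"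
  have A: "\<forall>x. ((\<lambda>y. Hk j y * Hk k (1 - y)) has_real_derivative ?f' x) (at x)"
  proof
    fix x
    have d1: "((\<lambda>y. Hk k (1 - y)) has_real_derivative ((- real k * Hk (k+1) (1-x) + Hk (k+2) (1-x)) * (-1))) (at x)"
      by (rule DERIV_chain2[OF Hk_deriv]) (auto intro!: derivative_eq_intros)
    show "((\<lambda>y. Hk j y * Hk k (1 - y)) has_real_derivative ?f' x) (at x)"
      by (rule DERIV_cong[OF DERIV_mult[OF Hk_deriv d1]]) (simp add: algebra_simps)
  qed
  have B: "Cb ?f'"
  proof -
    have e: "?f' = (\<lambda>y. ((\<lambda>y. (- real j) * (Hk (j+1) y * Hk k (1 - y))) y + (\<lambda>y. Hk (j+2) y * Hk k (1 - y)) y)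
       + ((\<lambda>y. real k * (Hk j y * Hk (k+1) (1 - y))) y + (\<lambda>y. (-1) * (Hk j y * Hk (k+2) (1 - y))) y))"
      by (auto simp: fun_eq_iff algebra_simps)
    show ?thesis unfolding e by (intro Cb.intros)
  qed
  show ?case by (rule exI[of _ ?f'], rule conjI[OF A B])
next
  case (add f g)
  then obtain f' g' where "\<forall>x. (f has_real_derivative f' x) (at x)" "Cb f'"
    "\<forall>x. (g has_real_derivative g' x) (at x)" "Cb g'" by blast
  then show ?case by (intro exI[of _ "\<lambda>x. f' x + g' x"]) (auto intro!: DERIV_add Cb.add)
next
  case (smult f c)
  then obtain f' where "\<forall>x. (f has_real_derivative f' x) (at x)" "Cb f'" by blast
  then show ?case by (intro exI[of _ "\<lambda>x. c * f' x"]) (auto intro!: DERIV_cmult Cb.smult)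
qed

definition dclosed :: "((real \<Rightarrow> real) \<Rightarrow> bool) \<Rightarrow> bool" where
  "dclosed P \<longleftrightarrow> (\<forall>f. P f \<longrightarrow> (\<exists>f'. (\<forall>x. (f has_real_derivative f' x) (at x)) \<and> P f'))"

definition sm :: "(real \<Rightarrow> real) \<Rightarrow> bool" where
  "sm f \<longleftrightarrow> (\<exists>P. dclosed P \<and> P f)"

lemma sm_Cb: "Cb f \<Longrightarrow> sm f"
  unfolding sm_def dclosed_def using Cb_deriv by blast

lemma sm_deriv:
  assumes "sm f"
  shows "(\<forall>x. (f has_real_derivative deriv f x) (at x)) \<and> sm (deriv f)"
proof -
  obtain P where P: "dclosed P" "P f" using assms sm_def by blast
  then obtain f' where f': "\<forall>x. (f has_real_derivative f' x) (at x)" "P f'"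
    unfolding dclosed_def by blast
  have "deriv f = f'" using f'(1) by (auto intro!: DERIV_imp_deriv)
  then show ?thesis using f' P sm_def by auto
qed

lemma sm_smooth:
  assumes "sm f" shows "smooth_fun f"
proof -
  have "sm ((deriv ^^ n) f)" for n
    by (induction n) (use assms sm_deriv in auto)
  then show ?thesis unfolding smooth_fun_def
    using sm_deriv real_differentiable_def by blast
qed

lemma sm_diff:
  assumes "sm f" "sm g" shows "sm (\<lambda>y. f y - g y)"
proof -
  obtain P where P: "dclosed P" "P f" using assms sm_def by blast
  obtain Q where Q: "dclosed Q" "Q g" using assms sm_def by blast
  let ?R = "\<lambda>h. \<exists>a b. P a \<and> Q b \<and> h = (\<lambda>y. a y - b y)"
  have "dclosed ?R"
    unfolding dclosed_def
  proof (intro allI impI)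
    fix h assume "?R h"
    then obtain a b where ab: "P a" "Q b" "h = (\<lambda>y. a y - b y)" by blast
    obtain a' where "\<forall>x. (a has_real_derivative a' x) (at x)" "P a'" using P(1) ab(1) dclosed_def by blast
    moreover obtain b' where "\<forall>x. (b has_real_derivative b' x) (at x)" "Q b'" using Q(1) ab(2) dclosed_def by blast
    ultimately show "\<exists>f'. (\<forall>x. (h has_real_derivative f' x) (at x)) \<and> ?R f'"
      using ab(3) by (intro exI[of _ "\<lambda>y. a' y - b' y"]) (auto intro!: DERIV_diff)
  qed
  then show ?thesis unfolding sm_def using P Q by blast
qed

lemma sm_affine:
  assumes "sm f" shows "sm (\<lambda>y. f (\<alpha> * y + \<gamma>))"
proof -
  obtain P where P: "dclosed P" "P f" using assms sm_def by blast
  let ?R = "\<lambda>h. \<exists>a c. P a \<and> h = (\<lambda>y. c * a (\<alpha> * y + \<gamma>))"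
  have "dclosed ?R"
    unfolding dclosed_def
  proof (intro allI impI)
    fix h assume "?R h"
    then obtain a c where ab: "P a" "h = (\<lambda>y. c * a (\<alpha> * y + \<gamma>))" by blast
    obtain a' where a': "\<forall>x. (a has_real_derivative a' x) (at x)" "P a'" using P(1) ab(1) dclosed_def by blast
    have "\<forall>x. (h has_real_derivative (c * \<alpha>) * a' (\<alpha> * x + \<gamma>)) (at x)"
    proof
      fix x
      have d1: "((\<lambda>y. a (\<alpha> * y + \<gamma>)) has_real_derivative a' (\<alpha> * x + \<gamma>) * \<alpha>) (at x)"
        by (rule DERIV_chain2[OF a'(1)[rule_format]]) (auto intro!: derivative_eq_intros)
      show "(h has_real_derivative (c * \<alpha>) * a' (\<alpha> * x + \<gamma>)) (at x)"
        unfolding ab(2) by (rule DERIV_cong[OF DERIV_cmult[OF d1]]) (simp add: algebra_simps)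
    qed
    then show "\<exists>f'. (\<forall>x. (h has_real_derivative f' x) (at x)) \<and> ?R f'"
      using a'(2) by (intro exI[of _ "\<lambda>x. (c * \<alpha>) * a' (\<alpha> * x + \<gamma>)"] conjI exI[of _ a'] exI[of _ "c*\<alpha>"]) auto
  qed
  moreover have "?R (\<lambda>y. f (\<alpha> * y + \<gamma>))" using P(2) by (intro exI[of _ f] exI[of _ 1]) auto
  ultimately show ?thesis unfolding sm_def by blast
qed

lemma sm_cmult:
  assumes "sm f" shows "sm (\<lambda>y. c * f y)"
proof -
  obtain P where P: "dclosed P" "P f" using assms sm_def by blast
  let ?R = "\<lambda>h. \<exists>a. P a \<and> h = (\<lambda>y. c * a y)"
  have "dclosed ?R"
    unfolding dclosed_def
  proof (intro allI impI)
    fix h assume "?R h"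
    then obtain a where ab: "P a" "h = (\<lambda>y. c * a y)" by blast
    obtain a' where a': "\<forall>x. (a has_real_derivative a' x) (at x)" "P a'" using P(1) ab(1) dclosed_def by blast
    then show "\<exists>f'. (\<forall>x. (h has_real_derivative f' x) (at x)) \<and> ?R f'"
      using ab by (intro exI[of _ "\<lambda>y. c * a' y"]) (auto intro!: DERIV_cmult)
  qed
  then show ?thesis unfolding sm_def using P by blast
qed

lemma sm_antideriv:
  assumes "sm f" "\<And>x. (F has_real_derivative f x) (at x)" shows "sm F"
proof -
  obtain P where P: "dclosed P" "P f" using assms sm_def by blast
  let ?R = "\<lambda>h. P h \<or> h = F"
  have "dclosed ?R" using P assms(2) unfolding dclosed_def by blast
  then show ?thesis unfolding sm_def by blast
qed

definition bump :: "real \<Rightarrow> real" where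
  "bump y = Hk 0 y * Hk 0 (1 - y)"

lemma sm_bump: "sm bump"
  unfolding bump_def[abs_def] by (rule sm_Cb, rule Cb.base)

lemma sm_cont: assumes "sm f" shows "continuous_on A f"
proof (rule continuous_at_imp_continuous_on, intro ballI)
  fix x show "isCont f x" using sm_deriv[OF assms] by (blast intro: DERIV_isCont)
qed

lemma bump_nonneg: "0 \<le> bump y"
  by (simp add: bump_def Hk_def)

lemma bump_zero: "y \<le> 0 \<or> 1 \<le> y \<Longrightarrow> bump y = 0"
  by (auto simp: bump_def Hk_def)

lemma bump_lower: "1/4 \<le> y \<Longrightarrow> y \<le> 3/4 \<Longrightarrow> exp (-8) \<le> bump y"
proof -
  assume y: "1/4 \<le> y" "y \<le> 3/4"
  have "inverse y \<le> inverse (1/4)" by (rule le_imp_inverse_le) (use y in auto)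
  then have a: "exp (-4) \<le> exp (- inverse y)" by simp
  have "inverse (1 - y) \<le> inverse (1/4)" by (rule le_imp_inverse_le) (use y in auto)
  then have b: "exp (-4) \<le> exp (- inverse (1 - y))" by simp
  have "exp (-4) * exp (-4) \<le> exp (- inverse y) * exp (- inverse (1 - y))"
    using a b by (intro mult_mono) auto
  moreover have "exp (-8::real) = exp (-4) * exp (-4)" by (simp flip: exp_add)
  ultimately show ?thesis using y by (simp add: bump_def Hk_def)
qed

definition bC :: real where "bC = integral {-1..1} bump"

lemma bump_int: "bump integrable_on {a..b}"
  by (rule integrable_continuous_interval, rule sm_cont[OF sm_bump])

lemma bC_pos: "0 < bC"
proof -
  have "integral {1/4..3/4::real} (\<lambda>_. exp (-8::real)) \<le> integral {1/4..3/4} bump"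
    by (rule integral_le) (auto intro: bump_int bump_lower)
  also have "\<dots> \<le> integral {-1..1} bump"
    by (rule integral_subset_le) (auto intro: bump_int bump_nonneg)
  finally have "exp (-8) / 2 \<le> bC" by (simp add: bC_def)
  moreover have "0 < exp (-8::real) / 2" by simp
  ultimately show ?thesis by linarith
qed

definition stp :: "real \<Rightarrow> real" where
  "stp y = integral {-1..y} bump / bC"

lemma int_bump_neg: "y \<le> 0 \<Longrightarrow> integral {-1..y} bump = 0"
proof -
  assume "y \<le> 0"
  then have "integral {-1..y} bump = integral {-1..y} (\<lambda>_. 0::real)"
    by (intro integral_cong) (auto intro: bump_zero)
  then show ?thesis by simp
qed

lemma stp_deriv: "(stp has_real_derivative bump x / bC) (at x)"
proof (cases "x < 0")
  case True
  have d: "((\<lambda>_. 0) has_real_derivative bump x / bC) (at x)"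
    using True bump_zero[of x] by simp
  show ?thesis
    by (rule has_field_derivative_transform_within_open[OF d, of "{..<0}"])
       (use True in \<open>auto simp: stp_def int_bump_neg\<close>)
next
  case False
  have "((\<lambda>u. integral {-1..u} bump) has_vector_derivative bump x) (at x within {-1..x+1})"
    by (rule integral_has_vector_derivative) (use False sm_cont[OF sm_bump] in auto)
  moreover have "at x within {-1..x+1} = at x"
    by (rule at_within_interior) (use False in auto)
  ultimately have "((\<lambda>u. integral {-1..u} bump) has_real_derivative bump x) (at x)"
    by (simp add: has_real_derivative_iff_has_vector_derivative)
  then show ?thesis unfolding stp_def[abs_def] by (rule DERIV_cdivide)
qed

lemma sm_stp: "sm stp"
proof (rule sm_antideriv[OF _ stp_deriv])
  show "sm (\<lambda>x. bump x / bC)"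
    using sm_cmult[OF sm_bump, of "inverse bC"] by (simp add: field_simps)
qed

lemma stp_zero: "y \<le> 0 \<Longrightarrow> stp y = 0"
  by (simp add: stp_def int_bump_neg)

lemma stp_one: "1 \<le> y \<Longrightarrow> stp y = 1"
proof -
  assume y: "1 \<le> y"
  have "integral {-1..1} bump + integral {1..y} bump = integral {-1..y} bump"
    using Henstock_Kurzweil_Integration.integral_combine[where f=bump and a="-1" and c=1 and b=y] y bump_int by simp
  moreover have "integral {1..y} bump = integral {1..y} (\<lambda>_. 0::real)"
    by (intro integral_cong) (auto intro: bump_zero)
  ultimately show ?thesis using bC_pos by (simp add: stp_def bC_def)
qed

lemma stp_bounds: "0 \<le> stp y \<and> stp y \<le> 1"
proof (cases "y \<le> 1")
  case True
  have "0 \<le> integral {-1..y} bump"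
    by (rule integral_nonneg) (auto intro: bump_int bump_nonneg)
  moreover have "integral {-1..y} bump \<le> integral {-1..1} bump"
  proof (cases "-1 \<le> y")
    case True
    show ?thesis by (rule integral_subset_le) (use \<open>y \<le> 1\<close> in \<open>auto intro: bump_int bump_nonneg\<close>)
  next
    case False
    then have "integral {-1..y} bump = 0" by simp
    moreover have "0 \<le> integral {-1..1} bump"
      by (rule integral_nonneg) (auto intro: bump_int bump_nonneg)
    ultimately show ?thesis by simp
  qed
  ultimately show ?thesis using bC_pos by (simp add: stp_def bC_def field_simps)
next
  case False
  then show ?thesis using stp_one[of y] by simp
qed

definition plat :: "real \<Rightarrow> real \<Rightarrow> real \<Rightarrow> real" where
  "plat k x y = stp (k * y + (-1)) - stp (k * y + (2 - k * x))"

lemma sm_plat: "sm (plat k x)"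
  unfolding plat_def[abs_def]
  by (rule sm_diff[OF sm_affine[OF sm_stp, of k "-1"] sm_affine[OF sm_stp, of k "2 - k * x"]])

lemma plat_bound: "\<bar>plat k x y\<bar> \<le> 1"
proof -
  have "0 \<le> stp (k * y + (-1)) \<and> stp (k * y + (-1)) \<le> 1" by (rule stp_bounds)
  moreover have "0 \<le> stp (k * y + (2 - k * x)) \<and> stp (k * y + (2 - k * x)) \<le> 1" by (rule stp_bounds)
  ultimately show ?thesis unfolding plat_def by linarith
qed

lemma plat_support:
  assumes "k > 0" "k * x > 3" "plat k x y \<noteq> 0"
  shows "y \<in> {1/k..x - 1/k}"
proof (rule ccontr)
  assume "y \<notin> {1/k..x - 1/k}"
  then consider "y < 1/k" | "y > x - 1/k" by auto
  then show False
  proof cases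
    case 1
    then have "k * y < 1" using assms(1) by (simp add: field_simps)
    then have "stp (k * y + (-1)) = 0" "stp (k * y + (2 - k * x)) = 0"
      using assms(2) by (auto intro!: stp_zero)
    then show False using assms(3) by (simp add: plat_def)
  next
    case 2
    then have "k * y > k * x - 1" using assms(1) by (simp add: field_simps)
    then have "stp (k * y + (-1)) = 1" "stp (k * y + (2 - k * x)) = 1"
      using assms(2) by (auto intro!: stp_one)
    then show False using assms(3) by (simp add: plat_def)
  qed
qed

lemma test_fun_plat:
  assumes "0 < x" "x \<le> t0" "k > 0" "k * x > 3"
  shows "test_fun {0<..<t0} (plat k x)"
  unfolding test_fun_def
proof (intro conjI)
  show "smooth_fun (plat k x)" by (rule sm_smooth[OF sm_plat])
  have sub: "closure {r. plat k x r \<noteq> 0} \<subseteq> {1/k..x - 1/k}"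
    by (rule closure_minimal) (use plat_support[OF assms(3,4)] in auto)
  show "compact (closure {r. plat k x r \<noteq> 0})"
    unfolding compact_eq_bounded_closed
    using bounded_subset[OF bounded_closed_interval sub] by simp
  show "closure {r. plat k x r \<noteq> 0} \<subseteq> {0<..<t0}"
  proof -
    have "{1/k..x - 1/k} \<subseteq> {0<..<t0}"
    proof
      fix r assume r: "r \<in> {1/k..x - 1/k}"
      have a: "0 < 1/k" using assms by simp
      have "1/k \<le> r" "r \<le> x - 1/k" using r by auto
      then show "r \<in> {0<..<t0}" using a assms(2) by (simp only: greaterThanLessThan_iff) linarith
    qed
    then show ?thesis using sub by blast
  qed
qed

lemma plat_lim:
  assumes "0 < x"
  shows "(\<lambda>k. plat (real k) x y) \<longlonglongrightarrow> indicator {0<..<x} y"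
proof (rule tendsto_eventually)
  obtain N :: nat where N: "2/x + 2/\<bar>y\<bar> + 2/\<bar>x - y\<bar> < real N"
    using reals_Archimedean2 by blast
  have pos: "0 \<le> 2/\<bar>y\<bar>" "0 \<le> 2/\<bar>x - y\<bar>" "0 < 2/x" using assms by auto
  show "\<forall>\<^sub>F k in sequentially. plat (real k) x y = indicator {0<..<x} y"
    unfolding eventually_sequentially
  proof (intro exI allI impI)
    fix k assume "N \<le> k"
    then have kN: "real N \<le> real k" by simp
    have k1: "2/x < real k" "2/\<bar>y\<bar> \<le> real k" "2/\<bar>x-y\<bar> \<le> real k" using N kN pos by linarith+
    have kx: "2 < real k * x" using k1(1) assms by (simp add: field_simps)
    consider "y \<le> 0" | "0 < y" "y < x" | "x \<le> y" by linarith
    then show "plat (real k) x y = indicator {0<..<x} y"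
    proof cases
      case 1
      have "real k * y \<le> 0" using 1 by (simp add: mult_nonneg_nonpos)
      then have "stp (real k * y + (-1)) = 0" "stp (real k * y + (2 - real k * x)) = 0"
        using kx by (auto intro!: stp_zero)
      then show ?thesis using 1 by (simp add: plat_def)
    next
      case 2
      have "2 \<le> real k * y" using k1(2) 2 by (simp add: field_simps)
      moreover have "2 \<le> real k * (x - y)" using k1(3) 2 by (simp add: field_simps)
      ultimately have "stp (real k * y + (-1)) = 1" "stp (real k * y + (2 - real k * x)) = 0"
        by (auto intro!: stp_one stp_zero simp: algebra_simps)
      then show ?thesis using 2 by (simp add: plat_def)
    next
      case 3
      have "real k * x \<le> real k * y" using 3 by (simp add: mult_left_mono)
      then have "stp (real k * y + (-1)) = 1" "stp (real k * y + (2 - real k * x)) = 1"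
        using kx by (auto intro!: stp_one)
      then show ?thesis using 3 by (simp add: plat_def)
    qed
  qed
qed

lemma smooth_deriv: assumes "smooth_fun f" shows "smooth_fun (deriv f)"
  unfolding smooth_fun_def
proof (intro allI)
  fix n x
  have e: "(deriv ^^ n) (deriv f) = (deriv ^^ (Suc n)) f" by (simp only: funpow_Suc_right comp_apply)
  show "(deriv ^^ n) (deriv f) differentiable at x" unfolding e
    using assms unfolding smooth_fun_def by blast
qed

lemma smooth_has_deriv: assumes "smooth_fun f" shows "(f has_real_derivative deriv f x) (at x)"
proof -
  have "(deriv ^^ 0) f differentiable at x" using assms unfolding smooth_fun_def by blast
  then have "f differentiable at x" by simp
  then show ?thesis by (simp add: DERIV_deriv_iff_real_differentiable)
qed

lemma smooth_cont: assumes "smooth_fun f" shows "continuous_on A f"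
proof (rule continuous_at_imp_continuous_on, intro ballI)
  fix x show "isCont f x" using smooth_has_deriv[OF assms] by (blast intro: DERIV_isCont)
qed

lemma test_fun_zero: "y \<notin> closure {r. f r \<noteq> 0} \<Longrightarrow> f y = 0"
  using closure_subset[of "{r. f r \<noteq> 0}"] by blast

lemma test_fun_deriv:
  assumes "test_fun I f" shows "test_fun I (deriv f)"
proof -
  have sf: "smooth_fun f" using assms test_fun_def by blast
  have "{r. deriv f r \<noteq> 0} \<subseteq> closure {r. f r \<noteq> 0}"
  proof
    fix y assume y: "y \<in> {r. deriv f r \<noteq> 0}"
    show "y \<in> closure {r. f r \<noteq> 0}"
    proof (rule ccontr)
      assume ny: "y \<notin> closure {r. f r \<noteq> 0}"
      have d: "((\<lambda>_. 0) has_real_derivative 0) (at y)" by simp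
      have "(f has_real_derivative 0) (at y)"
      proof (rule has_field_derivative_transform_within_open[OF d, of "- closure {r. f r \<noteq> 0}"])
        fix z assume "z \<in> - closure {r. f r \<noteq> 0}"
        then have "z \<notin> {r. f r \<noteq> 0}" using closure_subset[of "{r. f r \<noteq> 0}"] by blast
        then show "0 = f z" by simp
      qed (use ny in auto)
      then have "deriv f y = 0" by (rule DERIV_imp_deriv)
      then show False using y by simp
    qed
  qed
  then have sub: "closure {r. deriv f r \<noteq> 0} \<subseteq> closure {r. f r \<noteq> 0}"
    by (simp add: closure_minimal)
  show ?thesis unfolding test_fun_def
  proof (intro conjI)
    show "smooth_fun (deriv f)" using sf smooth_deriv by blast
    have "bounded (closure {r. f r \<noteq> 0})" using assms unfolding test_fun_def
      using compact_imp_bounded by blast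
    then show "compact (closure {r. deriv f r \<noteq> 0})"
      unfolding compact_eq_bounded_closed using bounded_subset[OF _ sub] by simp
    show "closure {r. deriv f r \<noteq> 0} \<subseteq> I" using assms sub unfolding test_fun_def by blast
  qed
qed

lemma bridge:
  fixes F :: "real \<Rightarrow> 'b::euclidean_space"
  assumes "continuous_on {a..b} F"
  shows "integrable (lebesgue_on {a<..<b}) F"
    "integral\<^sup>L (lebesgue_on {a<..<b}) F = integral {a..b} F"
proof -
  have "F absolutely_integrable_on {a..b}" by (rule absolutely_integrable_continuous_real[OF assms])
  then have ai: "F absolutely_integrable_on {a<..<b}" by (rule set_integrable_subset) auto
  show i: "integrable (lebesgue_on {a<..<b}) F" by (rule absolutely_integrable_imp_integrable[OF ai]) auto
  have "(F has_integral integral\<^sup>L (lebesgue_on {a<..<b}) F) {a<..<b}"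
    by (rule has_integral_integral_lebesgue_on[OF i]) auto
  then have "integral {a<..<b} F = integral\<^sup>L (lebesgue_on {a<..<b}) F" by (rule integral_unique)
  then show "integral\<^sup>L (lebesgue_on {a<..<b}) F = integral {a..b} F"
    using integral_open_interval_real[of a b F] by simp
qed

lemma restr_ind:
  fixes g :: "real \<Rightarrow> 'b::{banach, second_countable_topology}"
  assumes "S \<subseteq> T" "S \<in> sets lebesgue" "T \<in> sets lebesgue"
  shows "integral\<^sup>L (lebesgue_on T) (\<lambda>y. indicator S y *\<^sub>R g y) = integral\<^sup>L (lebesgue_on S) g"
proof -
  have "integral\<^sup>L (lebesgue_on T) (\<lambda>y. indicator S y *\<^sub>R g y)
      = integral\<^sup>L lebesgue (\<lambda>y. indicator T y *\<^sub>R (indicator S y *\<^sub>R g y))"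
    by (rule integral_restrict_space) (use assms in auto)
  also have "\<dots> = integral\<^sup>L lebesgue (\<lambda>y. indicator S y *\<^sub>R g y)"
    by (rule Bochner_Integration.integral_cong) (use assms in \<open>auto split: split_indicator\<close>)
  also have "\<dots> = integral\<^sup>L (lebesgue_on S) g"
    by (rule integral_restrict_space[symmetric]) (use assms in auto)
  finally show ?thesis .
qed

lemma cont_ae_zero:
  fixes h :: "real \<Rightarrow> 'a::real_normed_vector"
  assumes ab: "a < b" and c: "continuous_on {a..b} h"
    and ae: "AE y in lebesgue_on {a<..<b}. h y = 0"
  shows "\<forall>y\<in>{a..b}. h y = 0"
proof -
  let ?U = "{a<..<b} \<inter> h -` (-{0})"
  have "continuous_on {a<..<b} h" by (rule continuous_on_subset[OF c]) auto
  then have oU: "open ?U" by (rule continuous_open_preimage) auto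
  have "AE y in lebesgue. y \<in> {a<..<b} \<longrightarrow> h y = 0"
    using ae by (subst (asm) AE_restrict_space_iff) auto
  then obtain N where N: "{y \<in> space lebesgue. \<not> (y \<in> {a<..<b} \<longrightarrow> h y = 0)} \<subseteq> N"
      "emeasure lebesgue N = 0" "N \<in> sets lebesgue"
    by (rule AE_E)
  then have "negligible N" by (simp add: negligible_iff_null_sets null_sets_def)
  moreover have "?U \<subseteq> N" using N(1) by auto
  ultimately have "negligible ?U" using negligible_subset by blast
  then have "?U = {}" using open_not_negligible oU by blast
  then have z: "\<forall>y\<in>{a<..<b}. h y = 0" by auto
  have cl: "closed {y \<in> {a..b}. h y = 0}"
    by (rule continuous_closed_preimage_constant[OF c]) auto
  have "closure {a<..<b} \<subseteq> {y \<in> {a..b}. h y = 0}"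
    by (rule closure_minimal[OF _ cl]) (use z in auto)
  then show ?thesis using ab by auto
qed

lemma deriv_cont_on:
  assumes "\<And>x. (g has_real_derivative g' x) (at x)" shows "continuous_on A g"
proof (rule continuous_at_imp_continuous_on, intro ballI)
  fix x show "isCont g x" using assms by (blast intro: DERIV_isCont)
qed

lemma ibp:
  fixes g h g' h' :: "real \<Rightarrow> real"
  assumes t0: "0 < t0" and dg: "\<And>x. (g has_real_derivative g' x) (at x)"
    and dh: "\<And>x. (h has_real_derivative h' x) (at x)"
    and cg': "continuous_on {0..t0} g'" and ch': "continuous_on {0..t0} h'"
    and g0: "g 0 = 0" and gt: "g t0 = 0"
  shows "integral\<^sup>L (lebesgue_on {0<..<t0}) (\<lambda>r. g' r * h r)
     = - integral\<^sup>L (lebesgue_on {0<..<t0}) (\<lambda>r. g r * h' r)"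
proof -
  have cg: "continuous_on {0..t0} g" by (rule deriv_cont_on[OF dg])
  have ch: "continuous_on {0..t0} h" by (rule deriv_cont_on[OF dh])
  have "((\<lambda>r. g' r * h r + g r * h' r) has_integral (g t0 * h t0 - g 0 * h 0)) {0..t0}"
  proof (rule fundamental_theorem_of_calculus)
    show "0 \<le> t0" using t0 by simp
    fix x
    have "((\<lambda>r. g r * h r) has_real_derivative (g' x * h x + h' x * g x)) (at x)"
      by (rule DERIV_mult[OF dg dh])
    then have "((\<lambda>r. g r * h r) has_real_derivative (g' x * h x + g x * h' x)) (at x within {0..t0})"
      by (simp add: has_field_derivative_at_within mult.commute)
    then show "((\<lambda>r. g r * h r) has_vector_derivative (g' x * h x + g x * h' x)) (at x within {0..t0})"
      by (simp add: has_real_derivative_iff_has_vector_derivative)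
  qed
  then have I: "integral {0..t0} (\<lambda>r. g' r * h r + g r * h' r) = 0"
    using g0 gt by (simp add: integral_unique)
  have c1: "continuous_on {0..t0} (\<lambda>r. g' r * h r)" using cg' ch by (intro continuous_intros)
  have c2: "continuous_on {0..t0} (\<lambda>r. g r * h' r)" using cg ch' by (intro continuous_intros)
  have "integral\<^sup>L (lebesgue_on {0<..<t0}) (\<lambda>r. g' r * h r + g r * h' r) = 0"
    using bridge(2)[of 0 t0 "\<lambda>r. g' r * h r + g r * h' r"] c1 c2 I
    by (simp add: continuous_on_add)
  moreover have "integral\<^sup>L (lebesgue_on {0<..<t0}) (\<lambda>r. g' r * h r + g r * h' r)
     = integral\<^sup>L (lebesgue_on {0<..<t0}) (\<lambda>r. g' r * h r) + integral\<^sup>L (lebesgue_on {0<..<t0}) (\<lambda>r. g r * h' r)"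
    by (rule Bochner_Integration.integral_add[OF bridge(1)[OF c1] bridge(1)[OF c2]])
  ultimately show ?thesis by simp
qed

lemma plat_meas: "plat k x \<in> borel_measurable (lebesgue_on S)" if "S \<in> sets lebesgue"
  by (rule continuous_imp_measurable_on_sets_lebesgue[OF sm_cont[OF sm_plat] that])

lemma plat_dct:
  fixes g :: "real \<Rightarrow> real"
  assumes g: "integrable (lebesgue_on {0<..<t0}) g" and x: "0 < x"
  shows "(\<lambda>k. integral\<^sup>L (lebesgue_on {0<..<t0}) (\<lambda>y. plat (real k) x y * g y))
     \<longlonglongrightarrow> integral\<^sup>L (lebesgue_on {0<..<t0}) (\<lambda>y. indicator {0<..<x} y * g y)"
proof (rule integral_dominated_convergence[where w = "\<lambda>y. norm (g y)"])
  have gm: "g \<in> borel_measurable (lebesgue_on {0<..<t0})" using g by (rule borel_measurable_integrable)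
  have im: "(indicator {0<..<x} :: real \<Rightarrow> real) \<in> borel_measurable (lebesgue_on {0<..<t0})"
    by (auto simp: borel_measurable_indicator_iff sets_restrict_space_iff)
  show "(\<lambda>y. indicator {0<..<x} y * g y) \<in> borel_measurable (lebesgue_on {0<..<t0})"
    using im gm by (rule borel_measurable_times)
  show "(\<lambda>y. plat (real k) x y * g y) \<in> borel_measurable (lebesgue_on {0<..<t0})" for k
    using plat_meas[of "{0<..<t0}"] gm by (intro borel_measurable_times) auto
  show "integrable (lebesgue_on {0<..<t0}) (\<lambda>y. norm (g y))" using g by (rule integrable_norm)
  show "AE y in lebesgue_on {0<..<t0}. (\<lambda>k. plat (real k) x y * g y) \<longlonglongrightarrow> indicator {0<..<x} y * g y"
    by (intro AE_I2 tendsto_mult_right plat_lim x)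
  show "AE y in lebesgue_on {0<..<t0}. norm (plat (real k) x y * g y) \<le> norm (g y)" for k
  proof (intro AE_I2)
    fix y
    have "\<bar>plat (real k) x y\<bar> * \<bar>g y\<bar> \<le> 1 * \<bar>g y\<bar>" by (rule mult_right_mono[OF plat_bound]) simp
    then show "norm (plat (real k) x y * g y) \<le> norm (g y)" by (simp add: abs_mult)
  qed
qed

lemma le_lim0:
  fixes a :: real
  assumes "\<And>n. \<bar>a\<bar> \<le> b n" "b \<longlonglongrightarrow> 0"
  shows "a = 0"
proof -
  have "\<bar>a\<bar> \<le> 0"
    by (rule tendsto_le[OF trivial_limit_sequentially assms(2) tendsto_const]) (use assms(1) in auto)
  then show ?thesis by simp
qed

lemma tf_out: "test_fun I \<phi> \<Longrightarrow> y \<notin> I \<Longrightarrow> \<phi> y = 0"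
  unfolding test_fun_def using test_fun_zero[of y \<phi>] by blast

lemma sets_sub_Ioo: "x \<le> t0 \<Longrightarrow> {0<..<x} \<in> sets (lebesgue_on {0<..<(t0::real)})"
  by (subst sets_restrict_space_iff) auto

lemma core:
  fixes f f1 f2 :: "nat \<Rightarrow> real \<Rightarrow> real" and w2 z :: "real \<Rightarrow> real" and t0 :: real
  assumes t0: "0 < t0"
    and tf: "\<And>n. test_fun {0<..<t0} (f n)"
    and i2: "\<And>n. integrable (lebesgue_on {0<..<t0}) (f2 n)"
    and wk1: "\<And>n \<phi>. test_fun {0<..<t0} \<phi> \<Longrightarrow>
       integral\<^sup>L (lebesgue_on {0<..<t0}) (\<lambda>r. deriv \<phi> r * f n r) = - integral\<^sup>L (lebesgue_on {0<..<t0}) (\<lambda>r. \<phi> r * f1 n r)"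
    and wk2: "\<And>n \<phi>. test_fun {0<..<t0} \<phi> \<Longrightarrow>
       integral\<^sup>L (lebesgue_on {0<..<t0}) (\<lambda>r. deriv \<phi> r * f1 n r) = - integral\<^sup>L (lebesgue_on {0<..<t0}) (\<lambda>r. \<phi> r * f2 n r)"
    and iw: "integrable (lebesgue_on {0<..<t0}) w2"
    and c2: "(\<lambda>n. integral\<^sup>L (lebesgue_on {0<..<t0}) (\<lambda>r. \<bar>f2 n r - w2 r\<bar>)) \<longlonglongrightarrow> 0"
    and cz: "continuous_on {0..t0} z"
    and c0: "(\<lambda>n. integral\<^sup>L (lebesgue_on {0<..<t0}) (\<lambda>r. \<bar>f n r - z r\<bar>)) \<longlonglongrightarrow> 0"
  shows "z 0 = 0 \<and> z t0 = 0 \<and> (\<exists>G. continuous_on {0..t0} G \<and> G 0 = 0 \<and> G t0 = 0 \<and>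
           (\<forall>y\<in>{0..t0}. (z has_real_derivative G y) (at y within {0..t0})))"
proof -
  let ?I = "{0<..<t0}"
  let ?M = "lebesgue_on {0<..<t0}"
  define D where "D n = deriv (f n)" for n
  define DD where "DD n = deriv (D n)" for n
  have tD: "test_fun ?I (D n)" for n unfolding D_def by (rule test_fun_deriv[OF tf])
  have tDD: "test_fun ?I (DD n)" for n unfolding DD_def by (rule test_fun_deriv[OF tD])
  have sf: "smooth_fun (f n)" for n using tf[of n] unfolding test_fun_def by blast
  have sD: "smooth_fun (D n)" for n using tD[of n] unfolding test_fun_def by blast
  have sDD: "smooth_fun (DD n)" for n using tDD[of n] unfolding test_fun_def by blast
  have dF: "(f n has_real_derivative D n x) (at x)" for n x
    unfolding D_def by (rule smooth_has_deriv[OF sf])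
  have dD: "(D n has_real_derivative DD n x) (at x)" for n x
    unfolding DD_def by (rule smooth_has_deriv[OF sD])
  have cD: "continuous_on A (D n)" for n A by (rule deriv_cont_on[OF dD])
  have cDD: "continuous_on A (DD n)" for n A by (rule smooth_cont[OF sDD])
  have cf: "continuous_on A (f n)" for n A by (rule deriv_cont_on[OF dF])
  have f0: "f n 0 = 0" "f n t0 = 0" for n using tf_out[OF tf] by auto
  have D0: "D n 0 = 0" "D n t0 = 0" for n using tf_out[OF tD] by auto

  have s4: "integral\<^sup>L ?M (\<lambda>r. \<phi> r * DD n r) = integral\<^sup>L ?M (\<lambda>r. \<phi> r * f2 n r)"
    if tp: "test_fun ?I \<phi>" for n \<phi>
  proof -
    have tp': "test_fun ?I (deriv \<phi>)" by (rule test_fun_deriv[OF tp])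
    have tp'': "test_fun ?I (deriv (deriv \<phi>))" by (rule test_fun_deriv[OF tp'])
    have sp: "smooth_fun \<phi>" using tp unfolding test_fun_def by blast
    have sp': "smooth_fun (deriv \<phi>)" using tp' unfolding test_fun_def by blast
    have sp'': "smooth_fun (deriv (deriv \<phi>))" using tp'' unfolding test_fun_def by blast
    have dp: "(\<phi> has_real_derivative deriv \<phi> x) (at x)" for x by (rule smooth_has_deriv[OF sp])
    have dp': "(deriv \<phi> has_real_derivative deriv (deriv \<phi>) x) (at x)" for x
      by (rule smooth_has_deriv[OF sp'])
    have cp': "continuous_on A (deriv \<phi>)" for A by (rule deriv_cont_on[OF dp'])
    have cp'': "continuous_on A (deriv (deriv \<phi>))" for A by (rule smooth_cont[OF sp''])
    have e1: "integral\<^sup>L ?M (\<lambda>r. deriv \<phi> r * f1 n r) = - integral\<^sup>L ?M (\<lambda>r. \<phi> r * f2 n r)"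
      by (rule wk2[OF tp])
    have e2: "integral\<^sup>L ?M (\<lambda>r. deriv (deriv \<phi>) r * f n r) = - integral\<^sup>L ?M (\<lambda>r. deriv \<phi> r * f1 n r)"
      by (rule wk1[OF tp'])
    have e3: "integral\<^sup>L ?M (\<lambda>r. deriv (deriv \<phi>) r * f n r) = - integral\<^sup>L ?M (\<lambda>r. deriv \<phi> r * D n r)"
      by (rule ibp[OF t0 dp' dF cp'' cD]) (use tf_out[OF tp'] in auto)
    have e4: "integral\<^sup>L ?M (\<lambda>r. deriv \<phi> r * D n r) = - integral\<^sup>L ?M (\<lambda>r. \<phi> r * DD n r)"
      by (rule ibp[OF t0 dp dD cp' cDD]) (use tf_out[OF tp] in auto)
    show ?thesis using e1 e2 e3 e4 by linarith
  qed

  have s5: "D n x = integral\<^sup>L ?M (\<lambda>y. indicator {0<..<x} y * f2 n y)" if x: "x \<in> {0..t0}" for n x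
  proof (cases "x = 0")
    case True
    then show ?thesis using D0 by simp
  next
    case False
    then have xp: "0 < x" using x by simp
    have iDD: "integrable ?M (DD n)" by (rule bridge(1)[OF cDD])
    have L1: "(\<lambda>k. integral\<^sup>L ?M (\<lambda>y. plat (real k) x y * DD n y))
       \<longlonglongrightarrow> integral\<^sup>L ?M (\<lambda>y. indicator {0<..<x} y * DD n y)"
      by (rule plat_dct[OF iDD xp])
    have L2: "(\<lambda>k. integral\<^sup>L ?M (\<lambda>y. plat (real k) x y * f2 n y))
       \<longlonglongrightarrow> integral\<^sup>L ?M (\<lambda>y. indicator {0<..<x} y * f2 n y)"
      by (rule plat_dct[OF i2 xp])
    obtain N :: nat where N: "3 / x < real N" using reals_Archimedean2 by blast
    have ev: "\<forall>\<^sub>F k in sequentially. integral\<^sup>L ?M (\<lambda>y. plat (real k) x y * DD n y)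
        = integral\<^sup>L ?M (\<lambda>y. plat (real k) x y * f2 n y)"
      unfolding eventually_sequentially
    proof (intro exI allI impI)
      fix k assume "N \<le> k"
      then have k3: "3 / x < real k" using N by linarith
      have "0 < 3 / x" using xp by simp
      then have k2: "0 < real k" using k3 by linarith
      have k1: "3 < real k * x" using k3 xp by (simp add: pos_divide_less_eq)
      note k = k1 k2
      show "integral\<^sup>L ?M (\<lambda>y. plat (real k) x y * DD n y) = integral\<^sup>L ?M (\<lambda>y. plat (real k) x y * f2 n y)"
        by (rule s4[OF test_fun_plat[OF xp _ k(2) k(1)]]) (use x in auto)
    qed
    have eqI: "integral\<^sup>L ?M (\<lambda>y. indicator {0<..<x} y * DD n y) = integral\<^sup>L ?M (\<lambda>y. indicator {0<..<x} y * f2 n y)"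
      using L2 Lim_transform_eventually[OF L1 ev] LIMSEQ_unique by blast
    have "integral\<^sup>L ?M (\<lambda>y. indicator {0<..<x} y * DD n y) = integral\<^sup>L (lebesgue_on {0<..<x}) (DD n)"
    proof -
      have "{0<..<x} \<subseteq> {0<..<t0}" using x by auto
      then show ?thesis using restr_ind[of "{0<..<x}" "{0<..<t0}" "DD n"] by simp
    qed
    also have "\<dots> = integral {0..x} (DD n)" by (rule bridge(2)[OF cDD])
    also have "\<dots> = D n x - D n 0"
    proof (rule integral_unique, rule fundamental_theorem_of_calculus)
      show "0 \<le> x" using xp by simp
      fix y show "(D n has_vector_derivative DD n y) (at y within {0..x})"
        using dD[of n y] by (simp add: has_real_derivative_iff_has_vector_derivative[symmetric] has_field_derivative_at_within)
    qed
    finally show ?thesis using eqI D0 by simp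
  qed

  have s5b: "f n x = integral {0..x} (D n)" if x: "x \<in> {0..t0}" for n x
  proof -
    have "integral {0..x} (D n) = f n x - f n 0"
    proof (rule integral_unique, rule fundamental_theorem_of_calculus)
      show "0 \<le> x" using x by simp
      fix y show "(f n has_vector_derivative D n y) (at y within {0..x})"
        using dF[of n y] by (simp add: has_real_derivative_iff_has_vector_derivative[symmetric] has_field_derivative_at_within)
    qed
    then show ?thesis using f0 by simp
  qed

  define e where "e n = integral\<^sup>L ?M (\<lambda>r. \<bar>f2 n r - w2 r\<bar>)" for n
  define G where "G x = integral\<^sup>L ?M (\<lambda>y. indicator {0<..<x} y * w2 y)" for x
  have e0: "0 \<le> e n" for n unfolding e_def by (rule integral_nonneg_AE) auto
  have elim: "e \<longlonglongrightarrow> 0" using c2 unfolding e_def[abs_def] .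
  have s6: "\<bar>D n x - G x\<bar> \<le> e n" if x: "x \<in> {0..t0}" for n x
  proof -
    have ms: "{0<..<x} \<in> sets ?M" using x by (intro sets_sub_Ioo) auto
    have ia: "integrable ?M (\<lambda>y. indicator {0<..<x} y * f2 n y)"
      using integrable_real_mult_indicator[OF ms i2[of n]] by (simp add: mult.commute)
    have ib: "integrable ?M (\<lambda>y. indicator {0<..<x} y * w2 y)"
      using integrable_real_mult_indicator[OF ms iw] by (simp add: mult.commute)
    have "D n x - G x = integral\<^sup>L ?M (\<lambda>y. indicator {0<..<x} y * f2 n y - indicator {0<..<x} y * w2 y)"
      unfolding s5[OF x] G_def using ia ib by simp
    also have "\<bar>\<dots>\<bar> \<le> integral\<^sup>L ?M (\<lambda>y. \<bar>indicator {0<..<x} y * f2 n y - indicator {0<..<x} y * w2 y\<bar>)"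
      using integral_norm_bound[of ?M "\<lambda>y. indicator {0<..<x} y * f2 n y - indicator {0<..<x} y * w2 y"] by simp
    also have "\<dots> \<le> e n" unfolding e_def
    proof (rule integral_mono)
      show "integrable ?M (\<lambda>y. \<bar>indicator {0<..<x} y * f2 n y - indicator {0<..<x} y * w2 y\<bar>)"
        using ia ib by auto
      show "integrable ?M (\<lambda>r. \<bar>f2 n r - w2 r\<bar>)" using i2 iw by auto
      fix y show "\<bar>indicator {0<..<x} y * f2 n y - indicator {0<..<x} y * w2 y\<bar> \<le> \<bar>f2 n y - w2 y\<bar>"
        by (auto split: split_indicator)
    qed
    finally show ?thesis .
  qed

  have ul: "uniform_limit {0..t0} D G sequentially"
    unfolding uniform_limit_iff
  proof (intro allI impI)
    fix \<epsilon> :: real assume "0 < \<epsilon>"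
    then have "\<forall>\<^sub>F n in sequentially. e n < \<epsilon>" using order_tendstoD(2)[OF elim] by blast
    then show "\<forall>\<^sub>F n in sequentially. \<forall>x\<in>{0..t0}. dist (D n x) (G x) < \<epsilon>"
    proof eventually_elim
      case (elim n)
      show ?case
      proof
        fix x assume "x \<in> {0..t0}"
        then have "\<bar>D n x - G x\<bar> \<le> e n" by (rule s6)
        then show "dist (D n x) (G x) < \<epsilon>" using elim by (simp add: dist_real_def)
      qed
    qed
  qed
  have cG: "continuous_on {0..t0} G"
    by (rule uniform_limit_theorem[OF _ ul]) (auto intro: always_eventually cD)

  define F where "F x = integral {0..x} G" for x
  have s8: "\<bar>f n x - F x\<bar> \<le> e n * t0" if x: "x \<in> {0..t0}" for n x
  proof -
    have cG': "continuous_on {0..x} G" by (rule continuous_on_subset[OF cG]) (use x in auto)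
    have "f n x - F x = integral {0..x} (\<lambda>y. D n y - G y)"
      unfolding s5b[OF x] F_def
      by (rule integral_diff[symmetric]) (auto intro!: integrable_continuous_interval cD cG')
    moreover have hi: "((\<lambda>y. D n y - G y) has_integral integral {0..x} (\<lambda>y. D n y - G y)) {0..x}"
      by (intro integrable_integral integrable_continuous_interval continuous_intros cD cG')
    have B: "\<And>y. y \<in> {0..x} - {} \<Longrightarrow> norm (D n y - G y) \<le> e n" using s6 x by auto
    have "norm (integral {0..x} (\<lambda>y. D n y - G y)) \<le> e n * x"
      using has_integral_bound_real[OF e0 finite.emptyI hi B] x by simp
    moreover have "e n * x \<le> e n * t0" using x e0[of n] by (auto intro: mult_left_mono)
    ultimately show ?thesis by simp
  qed

  have dFG: "(F has_vector_derivative G y) (at y within {0..t0})" if "y \<in> {0..t0}" for y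
    unfolding F_def[abs_def] by (rule integral_has_vector_derivative[OF cG that])
  have cF: "continuous_on {0..t0} F"
    unfolding continuous_on_eq_continuous_within
  proof
    fix y assume "y \<in> {0..t0}"
    then show "continuous (at y within {0..t0}) F" by (rule has_vector_derivative_continuous[OF dFG])
  qed

  have Fz: "\<forall>y\<in>{0..t0}. F y - z y = 0"
  proof (rule cont_ae_zero[OF t0])
    show "continuous_on {0..t0} (\<lambda>y. F y - z y)" using cF cz by (intro continuous_intros)
    define A where "A = integral\<^sup>L ?M (\<lambda>y. \<bar>F y - z y\<bar>)"
    have iA: "integrable ?M (\<lambda>y. \<bar>F y - z y\<bar>)"
      by (rule bridge(1)) (use cF cz in \<open>intro continuous_intros\<close>)
    have A0: "0 \<le> A" unfolding A_def by (rule integral_nonneg_AE) auto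
    have Ab: "A \<le> t0 * (e n * t0) + integral\<^sup>L ?M (\<lambda>r. \<bar>f n r - z r\<bar>)" for n
    proof -
      have i1: "integrable ?M (\<lambda>y. \<bar>F y - f n y\<bar>)"
        by (rule bridge(1)) (use cF cf in \<open>intro continuous_intros\<close>)
      have i3: "integrable ?M (\<lambda>y. \<bar>f n y - z y\<bar>)"
        by (rule bridge(1)) (use cz cf in \<open>intro continuous_intros\<close>)
      have "A \<le> integral\<^sup>L ?M (\<lambda>y. \<bar>F y - f n y\<bar> + \<bar>f n y - z y\<bar>)"
        unfolding A_def by (rule integral_mono[OF iA]) (use i1 i3 in auto)
      also have "\<dots> = integral\<^sup>L ?M (\<lambda>y. \<bar>F y - f n y\<bar>) + integral\<^sup>L ?M (\<lambda>y. \<bar>f n y - z y\<bar>)"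
        by (rule Bochner_Integration.integral_add[OF i1 i3])
      also have "integral\<^sup>L ?M (\<lambda>y. \<bar>F y - f n y\<bar>) \<le> integral\<^sup>L ?M (\<lambda>y. e n * t0)"
      proof (rule integral_mono[OF i1])
        show "integrable ?M (\<lambda>y. e n * t0)"
          using bridge(1)[of 0 t0 "\<lambda>y. e n * t0"] by simp
        fix y assume "y \<in> space ?M"
        then have "y \<in> {0..t0}" by (auto simp: space_restrict_space)
        then show "\<bar>F y - f n y\<bar> \<le> e n * t0" using s8[of y n] by (simp add: abs_minus_commute)
      qed
      also have "integral\<^sup>L ?M (\<lambda>y. e n * t0) = t0 * (e n * t0)"
        using t0 by (simp add: space_restrict_space measure_restrict_space)
      finally show ?thesis by simp
    qed
    have "(\<lambda>n. t0 * (e n * t0) + integral\<^sup>L ?M (\<lambda>r. \<bar>f n r - z r\<bar>)) \<longlonglongrightarrow> t0 * (0 * t0) + 0"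
      by (intro tendsto_intros elim c0)
    then have lim: "(\<lambda>n. t0 * (e n * t0) + integral\<^sup>L ?M (\<lambda>r. \<bar>f n r - z r\<bar>)) \<longlonglongrightarrow> 0" by simp
    have "\<bar>A\<bar> \<le> t0 * (e n * t0) + integral\<^sup>L ?M (\<lambda>r. \<bar>f n r - z r\<bar>)" for n using Ab[of n] A0 by simp
    then have "A = 0" using le_lim0[OF _ lim] by blast
    then have "AE y in ?M. \<bar>F y - z y\<bar> = 0"
      using integral_nonneg_eq_0_iff_AE[OF iA] A_def by simp
    then show "AE y in ?M. F y - z y = 0" by simp
  qed

  have F0: "F 0 = 0" unfolding F_def by simp
  have Ft: "F t0 = 0"
  proof (rule le_lim0)
    show "\<bar>F t0\<bar> \<le> e n * t0" for n using s8[of t0 n] f0 t0 by simp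
    show "(\<lambda>n. e n * t0) \<longlonglongrightarrow> 0" using tendsto_mult_left_zero[OF elim, of t0] .
  qed
  have G0: "G 0 = 0" unfolding G_def by simp
  have Gt: "G t0 = 0"
  proof (rule le_lim0)
    show "\<bar>G t0\<bar> \<le> e n" for n using s6[of t0 n] D0 t0 by simp
    show "e \<longlonglongrightarrow> 0" by (rule elim)
  qed

  have dz: "(z has_real_derivative G y) (at y within {0..t0})" if y: "y \<in> {0..t0}" for y
  proof -
    have "(F has_real_derivative G y) (at y within {0..t0})"
      using dFG[OF y] by (simp add: has_real_derivative_iff_has_vector_derivative)
    then show ?thesis
      by (rule has_field_derivative_transform_within[OF _ zero_less_one y]) (use Fz in auto)
  qed
  have z0: "z 0 = 0" using Fz F0 t0 by auto
  have zt: "z t0 = 0" using Fz Ft t0 by auto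
  show ?thesis using z0 zt cG G0 Gt dz by blast
qed

lemma pw_bound:
  fixes x \<epsilon> p :: real
  assumes x: "0 \<le> x" and e: "0 < \<epsilon>" and p: "1 \<le> p"
  shows "x \<le> \<epsilon> + \<epsilon> powr (1 - p) * x powr p"
proof (cases "x \<le> \<epsilon>")
  case True
  have "0 \<le> \<epsilon> powr (1 - p) * x powr p" by simp
  then show ?thesis using True by linarith
next
  case False
  then have xe: "\<epsilon> < x" by simp
  have "x powr p = x powr (1 + (p - 1))" by simp
  also have "\<dots> = x powr 1 * x powr (p - 1)" by (rule powr_add)
  also have "\<dots> = x * x powr (p - 1)" using x by simp
  finally have xp: "x powr p = x * x powr (p - 1)" .
  have m: "\<epsilon> powr (p - 1) \<le> x powr (p - 1)" by (rule powr_mono2) (use p e xe in auto)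
  have one: "\<epsilon> powr (1 - p) * \<epsilon> powr (p - 1) = 1"
    using e by (simp flip: powr_add)
  have "x = x * (\<epsilon> powr (1 - p) * \<epsilon> powr (p - 1))" using one by simp
  also have "\<dots> \<le> x * (\<epsilon> powr (1 - p) * x powr (p - 1))"
    by (intro mult_left_mono m) (use x in auto)
  also have "\<dots> = \<epsilon> powr (1 - p) * x powr p" using xp by simp
  finally show ?thesis using e by linarith
qed

lemma emeasure_Ioo_fin: "emeasure (lebesgue_on {a<..<(b::real)}) (space (lebesgue_on {a<..<b})) < \<infinity>"
proof -
  have "{a<..<b} \<in> lmeasurable" by (intro bounded_set_imp_lmeasurable) auto
  then have f: "emeasure lebesgue {a<..<b} < \<infinity>" by (simp add: fmeasurable_def)
  have "emeasure (lebesgue_on {a<..<b}) {a<..<b} = emeasure lebesgue {a<..<b}"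
    by (rule emeasure_restrict_space) auto
  then show ?thesis using f by (simp add: space_restrict_space)
qed

lemma memLp_integrable:
  fixes f :: "real \<Rightarrow> 'a::{banach, second_countable_topology}"
  assumes p: "1 \<le> p" and m: "memLp p {a<..<b} f"
  shows "integrable (lebesgue_on {a<..<b}) f"
proof -
  let ?M = "lebesgue_on {a<..<b}"
  have meas[measurable]: "f \<in> borel_measurable ?M" and fin: "Lp_integral p {a<..<b} f < \<infinity>"
    using m unfolding memLp_def by auto
  have "(\<integral>\<^sup>+ r. ennreal (norm (f r)) \<partial>?M) \<le> (\<integral>\<^sup>+ r. ennreal 1 + ennreal (norm (f r) powr p) \<partial>?M)"
  proof (intro nn_integral_mono)
    fix r
    have "norm (f r) \<le> 1 + 1 powr (1 - p) * norm (f r) powr p"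
      by (rule pw_bound) (use p in auto)
    then have "ennreal (norm (f r)) \<le> ennreal (1 + norm (f r) powr p)" by (intro ennreal_leI) simp
    then show "ennreal (norm (f r)) \<le> ennreal 1 + ennreal (norm (f r) powr p)"
      by simp
  qed
  also have "\<dots> = (\<integral>\<^sup>+ r. ennreal 1 \<partial>?M) + (\<integral>\<^sup>+ r. ennreal (norm (f r) powr p) \<partial>?M)"
    by (rule nn_integral_add) measurable
  also have "\<dots> < \<infinity>"
    using fin emeasure_Ioo_fin[of a b] unfolding Lp_integral_def by (simp add: ennreal_mult_less_top)
  finally show ?thesis unfolding integrable_iff_bounded using meas by simp
qed

lemma powr_sum_bound:
  fixes a b c p :: real
  assumes "0 \<le> a" "0 \<le> b" "0 \<le> c" "c \<le> a + b" "0 < p"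
  shows "c powr p \<le> 2 powr p * (a powr p + b powr p)"
proof -
  have cm: "c \<le> 2 * max a b" using assms by linarith
  have "c powr p \<le> (2 * max a b) powr p" by (rule powr_mono2[OF _ _ cm]) (use assms in auto)
  also have "\<dots> = 2 powr p * max a b powr p" by (rule powr_mult)
  also have "max a b powr p \<le> a powr p + b powr p" by (cases "a \<le> b") (auto simp: max_def)
  then have "2 powr p * max a b powr p \<le> 2 powr p * (a powr p + b powr p)" by (intro mult_left_mono) auto
  finally show ?thesis .
qed

lemma memLp_diff:
  fixes f g :: "real \<Rightarrow> 'a::{banach, second_countable_topology}"
  assumes p: "0 < p" and mf: "memLp p I f" and mg: "memLp p I g"
  shows "memLp p I (\<lambda>r. f r - g r)"
proof -
  have [measurable]: "f \<in> borel_measurable (lebesgue_on I)" "g \<in> borel_measurable (lebesgue_on I)"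
    using mf mg unfolding memLp_def by auto
  have ff: "Lp_integral p I f < \<infinity>" "Lp_integral p I g < \<infinity>" using mf mg unfolding memLp_def by auto
  have "Lp_integral p I (\<lambda>r. f r - g r) \<le>
     (\<integral>\<^sup>+ r. ennreal (2 powr p) * (ennreal (norm (f r) powr p) + ennreal (norm (g r) powr p)) \<partial>lebesgue_on I)"
    unfolding Lp_integral_def
  proof (intro nn_integral_mono)
    fix r
    have "norm (f r - g r) powr p \<le> 2 powr p * (norm (f r) powr p + norm (g r) powr p)"
      by (rule powr_sum_bound) (use p norm_triangle_ineq4 in auto)
    then show "ennreal (norm (f r - g r) powr p) \<le> ennreal (2 powr p) * (ennreal (norm (f r) powr p) + ennreal (norm (g r) powr p))"
      by (simp add: ennreal_plus[symmetric] ennreal_mult[symmetric] del: ennreal_plus)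
  qed
  also have "\<dots> = ennreal (2 powr p) * (Lp_integral p I f + Lp_integral p I g)"
  proof -
    have m1: "(\<lambda>r. ennreal (norm (f r) powr p)) \<in> borel_measurable (lebesgue_on I)" by measurable
    have m2: "(\<lambda>r. ennreal (norm (g r) powr p)) \<in> borel_measurable (lebesgue_on I)" by measurable
    show ?thesis unfolding Lp_integral_def
      using nn_integral_cmult[OF borel_measurable_add[OF m1 m2], of "ennreal (2 powr p)"] nn_integral_add[OF m1 m2]
      by simp
  qed
  also have "\<dots> < \<infinity>" using ff by (simp add: ennreal_mult_less_top)
  finally show ?thesis unfolding memLp_def by simp
qed

lemma Lp_norm_nonneg: "0 \<le> Lp_norm p I f"
  unfolding Lp_norm_def by simp

lemma Lp_to_L1:
  fixes h :: "nat \<Rightarrow> real \<Rightarrow> 'a::{banach, second_countable_topology}"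
  assumes p: "1 \<le> p" and t0: "0 < t0"
    and m: "\<And>n. memLp p {0<..<t0} (h n)"
    and lim: "(\<lambda>n. Lp_norm p {0<..<t0} (h n)) \<longlonglongrightarrow> 0"
  shows "(\<lambda>n. integral\<^sup>L (lebesgue_on {0<..<t0}) (\<lambda>r. norm (h n r))) \<longlonglongrightarrow> 0"
proof -
  let ?M = "lebesgue_on {0<..<t0}"
  define A where "A n = enn2real (Lp_integral p {0<..<t0} (h n))" for n
  have meas[measurable]: "h n \<in> borel_measurable ?M" for n using m unfolding memLp_def by auto
  have fin: "Lp_integral p {0<..<t0} (h n) < \<infinity>" for n using m unfolding memLp_def by auto
  have LA: "Lp_integral p {0<..<t0} (h n) = ennreal (A n)" for n
    unfolding A_def using fin[of n] by (simp add: ennreal_enn2real less_top)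
  have A0: "0 \<le> A n" for n unfolding A_def by simp
  have AN: "A n = Lp_norm p {0<..<t0} (h n) powr p" for n
    unfolding Lp_norm_def A_def[symmetric] using p A0[of n] by (simp add: powr_powr)
  have Alim: "A \<longlonglongrightarrow> 0"
  proof -
    have "(\<lambda>n. Lp_norm p {0<..<t0} (h n) powr p) \<longlonglongrightarrow> 0"
    proof (rule tendsto_zero_powrI[OF lim tendsto_const])
      show "\<forall>\<^sub>F n in sequentially. 0 \<le> Lp_norm p {0<..<t0} (h n)"
        by (rule always_eventually) (simp add: Lp_norm_nonneg)
      show "0 < p" using p by simp
    qed
    moreover have "A = (\<lambda>n. Lp_norm p {0<..<t0} (h n) powr p)" by (rule ext, rule AN)
    ultimately show ?thesis by simp
  qed
  have bound: "integral\<^sup>L ?M (\<lambda>r. norm (h n r)) \<le> \<epsilon> * t0 + \<epsilon> powr (1 - p) * A n" if e: "0 < \<epsilon>" for n \<epsilon>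
  proof -
    have "(\<integral>\<^sup>+ r. ennreal (norm (h n r)) \<partial>?M) \<le>
        (\<integral>\<^sup>+ r. ennreal \<epsilon> + ennreal (\<epsilon> powr (1 - p)) * ennreal (norm (h n r) powr p) \<partial>?M)"
    proof (intro nn_integral_mono)
      fix r
      have "norm (h n r) \<le> \<epsilon> + \<epsilon> powr (1 - p) * norm (h n r) powr p" by (rule pw_bound) (use p e in auto)
      then show "ennreal (norm (h n r)) \<le> ennreal \<epsilon> + ennreal (\<epsilon> powr (1 - p)) * ennreal (norm (h n r) powr p)"
        using e by (simp add: ennreal_plus[symmetric] ennreal_mult[symmetric] del: ennreal_plus)
    qed
    also have "\<dots> = ennreal \<epsilon> * ennreal t0 + ennreal (\<epsilon> powr (1 - p)) * ennreal (A n)"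
      using t0 by (subst nn_integral_add) (measurable, simp add: nn_integral_cmult LA[symmetric] Lp_integral_def
          space_restrict_space emeasure_restrict_space)
    also have "\<dots> = ennreal (\<epsilon> * t0 + \<epsilon> powr (1 - p) * A n)"
      using e t0 A0[of n] by (simp add: ennreal_plus[symmetric] ennreal_mult[symmetric] del: ennreal_plus)
    finally have le: "(\<integral>\<^sup>+ r. ennreal (norm (h n r)) \<partial>?M) \<le> ennreal (\<epsilon> * t0 + \<epsilon> powr (1 - p) * A n)" .
    have "integral\<^sup>L ?M (\<lambda>r. norm (h n r)) = enn2real (\<integral>\<^sup>+ r. ennreal (norm (h n r)) \<partial>?M)"
      by (rule integral_eq_nn_integral) auto
    also have "\<dots> \<le> \<epsilon> * t0 + \<epsilon> powr (1 - p) * A n"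
      by (rule enn2real_leI[OF _ le]) (use e t0 A0[of n] in auto)
    finally show ?thesis .
  qed
  show ?thesis
  proof (rule order_tendstoI)
    fix a :: real assume "a < 0"
    moreover have "0 \<le> integral\<^sup>L ?M (\<lambda>r. norm (h n r))" for n by (rule integral_nonneg_AE) auto
    ultimately show "\<forall>\<^sub>F n in sequentially. a < integral\<^sup>L ?M (\<lambda>r. norm (h n r))"
      by (intro always_eventually allI) (meson less_le_trans)
  next
    fix a :: real assume a: "0 < a"
    define \<epsilon> where "\<epsilon> = a / (2 * t0)"
    have e: "0 < \<epsilon>" using a t0 by (simp add: \<epsilon>_def)
    define K where "K = \<epsilon> powr (1 - p)"
    have K: "0 < K" using e by (simp add: K_def)
    have "\<forall>\<^sub>F n in sequentially. A n < a / (2 * K)"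
      by (rule order_tendstoD(2)[OF Alim]) (use a K in simp)
    then show "\<forall>\<^sub>F n in sequentially. integral\<^sup>L ?M (\<lambda>r. norm (h n r)) < a"
    proof eventually_elim
      case (elim n)
      have "K * A n < K * (a / (2 * K))" using elim K by (intro mult_strict_left_mono) auto
      also have "\<dots> = a / 2" using K by simp
      finally have "K * A n < a / 2" .
      moreover have "\<epsilon> * t0 = a / 2" using t0 by (simp add: \<epsilon>_def)
      ultimately show ?case using bound[OF e, of n] unfolding K_def by linarith
    qed
  qed
qed

lemma int_weight:
  fixes f :: "real \<Rightarrow> 'a::{banach, second_countable_topology}" and g :: "real \<Rightarrow> real"
  assumes f: "integrable (lebesgue_on {0<..<t0}) f" and g: "continuous_on {0..t0} g"
  shows "integrable (lebesgue_on {0<..<t0}) (\<lambda>r. g r *\<^sub>R f r)"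
proof -
  have "compact (g ` {0..t0})" by (rule compact_continuous_image[OF g]) simp
  then obtain B where B: "\<forall>y\<in>g ` {0..t0}. norm y \<le> B" using compact_imp_bounded bounded_iff by metis
  have gm: "g \<in> borel_measurable (lebesgue_on {0<..<t0})"
    by (rule continuous_imp_measurable_on_sets_lebesgue) (auto intro: continuous_on_subset[OF g])
  show ?thesis
  proof (rule Bochner_Integration.integrable_bound[where f="\<lambda>r. B *\<^sub>R f r"])
    show "integrable (lebesgue_on {0<..<t0}) (\<lambda>r. B *\<^sub>R f r)" using f by simp
    show "(\<lambda>r. g r *\<^sub>R f r) \<in> borel_measurable (lebesgue_on {0<..<t0})"
      using gm borel_measurable_integrable[OF f] by (rule borel_measurable_scaleR)
    show "AE x in lebesgue_on {0<..<t0}. norm (g x *\<^sub>R f x) \<le> norm (B *\<^sub>R f x)"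
    proof (rule AE_I2)
      fix x assume "x \<in> space (lebesgue_on {0<..<t0})"
      then have "x \<in> {0..t0}" by (auto simp: space_restrict_space)
      then have "\<bar>g x\<bar> \<le> B" using B by auto
      then have "\<bar>g x\<bar> * norm (f x) \<le> \<bar>B\<bar> * norm (f x)" by (intro mult_right_mono) auto
      then show "norm (g x *\<^sub>R f x) \<le> norm (B *\<^sub>R f x)" by simp
    qed
  qed
qed

lemma blP: "P = Re \<or> P = Im \<Longrightarrow> bounded_linear (\<lambda>v::complex^'l. P (v $ i))"
  by (auto intro!: bounded_linear_compose[OF bounded_linear_Re] bounded_linear_compose[OF bounded_linear_Im])

lemma Pnorm: "P = Re \<or> P = Im \<Longrightarrow> \<bar>P ((v::complex^'l) $ i)\<bar> \<le> norm v"
  using abs_Re_le_cmod[of "v $ i"] abs_Im_le_cmod[of "v $ i"] Finite_Cartesian_Product.norm_nth_le[of v i] by auto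

lemma weak_comp:
  fixes f g :: "real \<Rightarrow> complex^'l"
  assumes P: "P = Re \<or> P = Im" and w: "weak_deriv_on {0<..<t0} f g"
    and fi: "integrable (lebesgue_on {0<..<t0}) f" and gi: "integrable (lebesgue_on {0<..<t0}) g"
    and tp: "test_fun {0<..<t0} \<phi>"
  shows "integral\<^sup>L (lebesgue_on {0<..<t0}) (\<lambda>r. deriv \<phi> r * P (f r $ i))
    = - integral\<^sup>L (lebesgue_on {0<..<t0}) (\<lambda>r. \<phi> r * P (g r $ i))"
proof -
  let ?M = "lebesgue_on {0<..<t0}"
  have bl: "bounded_linear (\<lambda>v::complex^'l. P (v $ i))" by (rule blP[OF P])
  have sp: "smooth_fun \<phi>" using tp unfolding test_fun_def by blast
  have cp: "continuous_on {0..t0} \<phi>" by (rule smooth_cont[OF sp])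
  have cp': "continuous_on {0..t0} (deriv \<phi>)" by (rule smooth_cont[OF smooth_deriv[OF sp]])
  have i1: "integrable ?M (\<lambda>r. deriv \<phi> r *\<^sub>R f r)" by (rule int_weight[OF fi cp'])
  have i2: "integrable ?M (\<lambda>r. \<phi> r *\<^sub>R g r)" by (rule int_weight[OF gi cp])
  have eq: "integral\<^sup>L ?M (\<lambda>r. deriv \<phi> r *\<^sub>R f r) = - integral\<^sup>L ?M (\<lambda>r. \<phi> r *\<^sub>R g r)"
    using w tp unfolding weak_deriv_on_def by blast
  have sc: "P ((c *\<^sub>R v) $ i) = c * P (v $ i)" for c and v :: "complex^'l"
    using P by auto
  have mi: "P ((- v) $ i) = - P (v $ i)" for v :: "complex^'l"
    using P by auto
  have "integral\<^sup>L ?M (\<lambda>r. deriv \<phi> r * P (f r $ i)) = integral\<^sup>L ?M (\<lambda>r. P ((deriv \<phi> r *\<^sub>R f r) $ i))"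
    using sc by presburger
  also have "\<dots> = P ((integral\<^sup>L ?M (\<lambda>r. deriv \<phi> r *\<^sub>R f r)) $ i)"
    by (rule integral_bounded_linear[OF bl i1])
  also have "\<dots> = - P ((integral\<^sup>L ?M (\<lambda>r. \<phi> r *\<^sub>R g r)) $ i)" unfolding eq by (rule mi)
  also have "P ((integral\<^sup>L ?M (\<lambda>r. \<phi> r *\<^sub>R g r)) $ i) = integral\<^sup>L ?M (\<lambda>r. P ((\<phi> r *\<^sub>R g r) $ i))"
    by (rule integral_bounded_linear[OF bl i2, symmetric])
  also have "\<dots> = integral\<^sup>L ?M (\<lambda>r. \<phi> r * P (g r $ i))" using sc by presburger
  finally show ?thesis .
qed

lemma L1_comp:
  fixes a :: "nat \<Rightarrow> real \<Rightarrow> complex^'l" and b :: "real \<Rightarrow> complex^'l"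
  assumes p: "1 \<le> p" and t0: "0 < t0" and P: "P = Re \<or> P = Im"
    and ma: "\<And>n. memLp p {0<..<t0} (a n)" and mb: "memLp p {0<..<t0} b"
    and lim: "(\<lambda>n. Lp_norm p {0<..<t0} (\<lambda>r. a n r - b r)) \<longlonglongrightarrow> 0"
  shows "(\<lambda>n. integral\<^sup>L (lebesgue_on {0<..<t0}) (\<lambda>r. \<bar>P (a n r $ i) - P (b r $ i)\<bar>)) \<longlonglongrightarrow> 0"
proof -
  let ?M = "lebesgue_on {0<..<t0}"
  have bl: "bounded_linear (\<lambda>v::complex^'l. P (v $ i))" by (rule blP[OF P])
  have md: "memLp p {0<..<t0} (\<lambda>r. a n r - b r)" for n by (rule memLp_diff[OF _ ma mb]) (use p in simp)
  have L: "(\<lambda>n. integral\<^sup>L ?M (\<lambda>r. norm (a n r - b r))) \<longlonglongrightarrow> 0"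
    by (rule Lp_to_L1[OF p t0 md lim])
  have id: "integrable ?M (\<lambda>r. a n r - b r)" for n by (rule memLp_integrable[OF p md])
  show ?thesis
  proof (rule tendsto_sandwich[OF _ _ tendsto_const L])
    show "\<forall>\<^sub>F n in sequentially. 0 \<le> integral\<^sup>L ?M (\<lambda>r. \<bar>P (a n r $ i) - P (b r $ i)\<bar>)"
      by (rule always_eventually, rule allI, rule integral_nonneg_AE) auto
    show "\<forall>\<^sub>F n in sequentially. integral\<^sup>L ?M (\<lambda>r. \<bar>P (a n r $ i) - P (b r $ i)\<bar>) \<le> integral\<^sup>L ?M (\<lambda>r. norm (a n r - b r))"
    proof (rule always_eventually, rule allI)
      fix n
      have e: "P (a n r $ i) - P (b r $ i) = P ((a n r - b r) $ i)" for r
        using P by auto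
      have "integrable ?M (\<lambda>r. P ((a n r - b r) $ i))" by (rule integrable_bounded_linear[OF bl id])
      then have i1: "integrable ?M (\<lambda>r. \<bar>P ((a n r - b r) $ i)\<bar>)" by (rule integrable_abs)
      show "integral\<^sup>L ?M (\<lambda>r. \<bar>P (a n r $ i) - P (b r $ i)\<bar>) \<le> integral\<^sup>L ?M (\<lambda>r. norm (a n r - b r))"
        unfolding e by (rule integral_mono[OF i1 integrable_norm[OF id]]) (rule Pnorm[OF P])
    qed
  qed
qed

lemma compC1:
  fixes u u1 u2 :: "real \<Rightarrow> complex^'l" and \<psi> \<psi>1 \<psi>2 :: "nat \<Rightarrow> real \<Rightarrow> complex^'l"
    and P :: "complex \<Rightarrow> real"
  assumes p: "1 \<le> p" and t0: "0 < t0" and P: "P = Re \<or> P = Im"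
    and W: "W2p p {0<..<t0} u u1 u2"
    and t\<psi>: "\<And>n. vec_test_fun {0<..<t0} (\<psi> n)"
    and W\<psi>: "\<And>n. W2p p {0<..<t0} (\<psi> n) (\<psi>1 n) (\<psi>2 n)"
    and lim: "(\<lambda>n. Lp_norm p {0<..<t0} (\<lambda>r. \<psi> n r - u r) + Lp_norm p {0<..<t0} (\<lambda>r. \<psi>1 n r - u1 r)
                 + Lp_norm p {0<..<t0} (\<lambda>r. \<psi>2 n r - u2 r)) \<longlonglongrightarrow> 0"
    and cu: "continuous_on {0..t0} u"
  shows "P (u 0 $ i) = 0 \<and> P (u t0 $ i) = 0 \<and> (\<exists>G. continuous_on {0..t0} G \<and> G 0 = 0 \<and> G t0 = 0 \<and>
           (\<forall>y\<in>{0..t0}. ((\<lambda>r. P (u r $ i)) has_real_derivative G y) (at y within {0..t0})))"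
proof -
  let ?I = "{0<..<t0}"
  let ?M = "lebesgue_on {0<..<t0}"
  have bl: "bounded_linear (\<lambda>v::complex^'l. P (v $ i))" by (rule blP[OF P])
  have mu: "memLp p ?I u" "memLp p ?I u1" "memLp p ?I u2" "weak_deriv_on ?I u u1" "weak_deriv_on ?I u1 u2"
    using W unfolding W2p_def by auto
  have m\<psi>: "memLp p ?I (\<psi> n)" "memLp p ?I (\<psi>1 n)" "memLp p ?I (\<psi>2 n)"
      "weak_deriv_on ?I (\<psi> n) (\<psi>1 n)" "weak_deriv_on ?I (\<psi>1 n) (\<psi>2 n)" for n
    using W\<psi>[of n] unfolding W2p_def by auto
  have iu: "integrable ?M u2" by (rule memLp_integrable[OF p mu(3)])
  have i\<psi>: "integrable ?M (\<psi> n)" "integrable ?M (\<psi>1 n)" "integrable ?M (\<psi>2 n)" for n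
    using memLp_integrable[OF p m\<psi>(1)] memLp_integrable[OF p m\<psi>(2)] memLp_integrable[OF p m\<psi>(3)] by auto
  have nn: "0 \<le> Lp_norm p ?I f" for f :: "real \<Rightarrow> complex^'l" by (rule Lp_norm_nonneg)
  have lim0: "(\<lambda>n. Lp_norm p ?I (\<lambda>r. \<psi> n r - u r)) \<longlonglongrightarrow> 0"
    by (rule tendsto_sandwich[OF _ _ tendsto_const lim]) (auto intro!: always_eventually simp: nn add_increasing2)
  have lim2: "(\<lambda>n. Lp_norm p ?I (\<lambda>r. \<psi>2 n r - u2 r)) \<longlonglongrightarrow> 0"
    by (rule tendsto_sandwich[OF _ _ tendsto_const lim]) (auto intro!: always_eventually simp: nn add_increasing)
  show ?thesis
  proof (rule core[where f = "\<lambda>n r. P (\<psi> n r $ i)" and ?f1.0 = "\<lambda>n r. P (\<psi>1 n r $ i)"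
        and ?f2.0 = "\<lambda>n r. P (\<psi>2 n r $ i)" and ?w2.0 = "\<lambda>r. P (u2 r $ i)" and z = "\<lambda>r. P (u r $ i)"])
    show "0 < t0" by (rule t0)
    show "test_fun ?I (\<lambda>r. P (\<psi> n r $ i))" for n using t\<psi>[of n] P unfolding vec_test_fun_def by auto
    show "integrable ?M (\<lambda>r. P (\<psi>2 n r $ i))" for n by (rule integrable_bounded_linear[OF bl i\<psi>(3)])
    show "integral\<^sup>L ?M (\<lambda>r. deriv \<phi> r * P (\<psi> n r $ i)) = - integral\<^sup>L ?M (\<lambda>r. \<phi> r * P (\<psi>1 n r $ i))"
      if "test_fun ?I \<phi>" for n \<phi> by (rule weak_comp[OF P m\<psi>(4) i\<psi>(1) i\<psi>(2) that])
    show "integral\<^sup>L ?M (\<lambda>r. deriv \<phi> r * P (\<psi>1 n r $ i)) = - integral\<^sup>L ?M (\<lambda>r. \<phi> r * P (\<psi>2 n r $ i))"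
      if "test_fun ?I \<phi>" for n \<phi> by (rule weak_comp[OF P m\<psi>(5) i\<psi>(2) i\<psi>(3) that])
    show "integrable ?M (\<lambda>r. P (u2 r $ i))" by (rule integrable_bounded_linear[OF bl iu])
    show "(\<lambda>n. integral\<^sup>L ?M (\<lambda>r. \<bar>P (\<psi>2 n r $ i) - P (u2 r $ i)\<bar>)) \<longlonglongrightarrow> 0"
      by (rule L1_comp[OF p t0 P m\<psi>(3) mu(3) lim2])
    show "continuous_on {0..t0} (\<lambda>r. P (u r $ i))" by (rule bounded_linear.continuous_on[OF bl cu])
    show "(\<lambda>n. integral\<^sup>L ?M (\<lambda>r. \<bar>P (\<psi> n r $ i) - P (u r $ i)\<bar>)) \<longlonglongrightarrow> 0"
      by (rule L1_comp[OF p t0 P m\<psi>(1) mu(1) lim0])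
  qed
qed

lemma ext_deriv:
  fixes z G :: "real \<Rightarrow> real"
  assumes t0: "0 < t0" and z0: "z 0 = 0" and zt: "z t0 = 0" and cG: "continuous_on {0..t0} G"
    and G0: "G 0 = 0" and Gt: "G t0 = 0"
    and dz: "\<forall>y\<in>{0..t0}. (z has_real_derivative G y) (at y within {0..t0})"
  shows "(ext0 t0 z has_real_derivative ext0 t0 G y) (at y)" "continuous_on UNIV (ext0 t0 G)"
proof -
  have cl1: "closure {0..t0} = {0..t0}" by simp
  have cl2: "closure (- {0..t0}) = - {0<..<t0}" by (simp add: closure_complement)
  have bd: "x \<in> {0..t0} \<Longrightarrow> x \<in> - {0<..<t0} \<Longrightarrow> x = 0 \<or> x = t0" for x by auto
  have e1: "{0..t0} \<union> (closure {0..t0} \<inter> closure (- {0..t0})) = {0..t0}" by auto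
  have "((\<lambda>x. if x \<in> {0..t0} then z x else 0) has_vector_derivative
      (if y \<in> {0..t0} then G y else 0)) (at y within UNIV)"
  proof (rule has_vector_derivative_If_within_closures[where T = "- {0..t0}"])
    show "y \<in> {0..t0} \<union> - {0..t0}" by simp
    show "UNIV = {0..t0} \<union> - {0..t0}" by auto
    show "(z has_vector_derivative G y) (at y within {0..t0} \<union> (closure {0..t0} \<inter> closure (- {0..t0})))"
      if "y \<in> {0..t0} \<union> (closure {0..t0} \<inter> closure (- {0..t0}))"
      using that dz unfolding e1 by (simp add: has_real_derivative_iff_has_vector_derivative)
    show "((\<lambda>x. 0) has_vector_derivative 0) (at y within - {0..t0} \<union> (closure {0..t0} \<inter> closure (- {0..t0})))"
      by simp
    show "z y = 0" if "y \<in> closure {0..t0}" "y \<in> closure (- {0..t0})"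
      using that bd[of y] z0 zt unfolding cl1 cl2 by auto
    show "G y = 0" if "y \<in> closure {0..t0}" "y \<in> closure (- {0..t0})"
      using that bd[of y] G0 Gt unfolding cl1 cl2 by auto
  qed
  then show "(ext0 t0 z has_real_derivative ext0 t0 G y) (at y)"
    unfolding ext0_def[abs_def] by (simp add: has_real_derivative_iff_has_vector_derivative)
  have "continuous_on ({0..t0} \<union> ({..0} \<union> {t0..})) (\<lambda>x. if x \<in> {0..t0} then G x else 0)"
  proof (rule continuous_on_cases)
    show "closed {0..t0}" by simp
    show "closed ({..0} \<union> {t0..} :: real set)" by (intro closed_Un) auto
    show "continuous_on {0..t0} G" by (rule cG)
    show "continuous_on ({..0} \<union> {t0..}) (\<lambda>x. 0::real)" by simp
    show "\<forall>x. x \<in> {0..t0} \<and> x \<notin> {0..t0} \<or> x \<in> {..0} \<union> {t0..} \<and> x \<in> {0..t0} \<longrightarrow> G x = 0"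
      using G0 Gt t0 by auto
  qed
  moreover have "{0..t0} \<union> ({..0} \<union> {t0..}) = (UNIV :: real set)" by auto
  ultimately show "continuous_on UNIV (ext0 t0 G)" unfolding ext0_def[abs_def] by simp
qed

lemma Lp_bound_pos:
  fixes f :: "real \<Rightarrow> 'a::{banach, second_countable_topology}"
  assumes p: "1 \<le> p" and T: "0 < T" and C: "0 \<le> C"
    and m: "f \<in> borel_measurable (lebesgue_on {0<..})"
    and b: "\<And>r. 0 < r \<Longrightarrow> norm (f r) \<le> C" and z: "\<And>r. T < r \<Longrightarrow> f r = 0"
  shows "memLp p {0<..} f" "Lp_norm p {0<..} f \<le> C * T powr (1/p)"
proof -
  let ?M = "lebesgue_on ({0<..} :: real set)"
  have le: "Lp_integral p {0<..} f \<le> (\<integral>\<^sup>+ r. ennreal (C powr p) * indicator {0<..T} r \<partial>?M)"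
    unfolding Lp_integral_def
  proof (rule nn_integral_mono)
    fix r assume "r \<in> space ?M"
    then have r: "0 < r" by (simp add: space_restrict_space)
    show "ennreal (norm (f r) powr p) \<le> ennreal (C powr p) * indicator {0<..T} r"
    proof (cases "r \<le> T")
      case True
      have "norm (f r) powr p \<le> C powr p" by (rule powr_mono2) (use p b[OF r] in auto)
      then show ?thesis using True r by (simp add: ennreal_leI)
    next
      case False
      then show ?thesis using z[of r] by simp
    qed
  qed
  also have "\<dots> = ennreal (C powr p) * emeasure ?M {0<..T}"
    by (rule nn_integral_cmult_indicator) (auto simp: sets_restrict_space_iff)
  also have "emeasure ?M {0<..T} = ennreal T"
    using T by (subst emeasure_restrict_space; auto)
  finally have le2: "Lp_integral p {0<..} f \<le> ennreal (C powr p * T)"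
    using T by (simp add: ennreal_mult)
  then show "memLp p {0<..} f" unfolding memLp_def using m by (simp add: le_less_trans)
  have "enn2real (Lp_integral p {0<..} f) \<le> C powr p * T"
    by (rule enn2real_leI[OF _ le2]) (use T in simp)
  then have "enn2real (Lp_integral p {0<..} f) powr (1/p) \<le> (C powr p * T) powr (1/p)"
    by (intro powr_mono2) (use p in auto)
  also have "\<dots> = (C powr p) powr (1/p) * T powr (1/p)" by (rule powr_mult)
  also have "(C powr p) powr (1/p) = C" using p C by (simp add: powr_powr)
  finally show "Lp_norm p {0<..} f \<le> C * T powr (1/p)" unfolding Lp_norm_def .
qed

lemma uc_V:
  fixes V :: "real \<Rightarrow> 'a::real_normed_vector"
  assumes c: "continuous_on UNIV V" and z: "\<And>y. y \<notin> {0..t0} \<Longrightarrow> V y = 0" and e: "0 < e"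
  shows "\<exists>d>0. \<forall>a b. \<bar>a - b\<bar> < d \<longrightarrow> norm (V a - V b) < e"
proof -
  have "uniformly_continuous_on {-1..t0+1} V"
    by (rule compact_uniformly_continuous[OF continuous_on_subset[OF c]]) auto
  then obtain d where d: "0 < d" "\<And>x x'. x \<in> {-1..t0+1} \<Longrightarrow> x' \<in> {-1..t0+1} \<Longrightarrow> dist x' x < d \<Longrightarrow> dist (V x') (V x) < e"
    unfolding uniformly_continuous_on_def using e by metis
  show ?thesis
  proof (intro exI[of _ "min d 1"] conjI allI impI)
    show "0 < min d 1" using d by simp
    fix a b :: real assume ab: "\<bar>a - b\<bar> < min d 1"
    show "norm (V a - V b) < e"
    proof (cases "a \<in> {-1..t0+1} \<and> b \<in> {-1..t0+1}")
      case True
      then show ?thesis using d(2)[of b a] ab by (auto simp: dist_norm)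
    next
      case False
      then have "a \<notin> {0..t0} \<and> b \<notin> {0..t0}" using ab by auto
      then show ?thesis using z e by simp
    qed
  qed
qed

lemma lin_bound:
  fixes v V :: "real \<Rightarrow> 'a::real_normed_vector"
  assumes dv: "\<And>y. (v has_vector_derivative V y) (at y)"
    and B: "\<And>y y'. \<bar>y - y'\<bar> \<le> \<delta> \<Longrightarrow> norm (V y - V y') \<le> B"
    and ab: "\<bar>b - a\<bar> \<le> \<delta>"
  shows "norm (v b - v a - (b - a) *\<^sub>R V a) \<le> \<bar>b - a\<bar> * B"
proof -
  let ?S = "{x. \<bar>x - a\<bar> \<le> \<bar>b - a\<bar>}"
  have "norm (v b - v a - (\<lambda>h. h *\<^sub>R V a) (b - a)) \<le> norm (b - a) * B"
  proof (rule differentiable_bound_linearization[where S = ?S and f' = "\<lambda>x h. h *\<^sub>R V x"])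
    fix t :: real assume "t \<in> {0..1}"
    then show "a + t *\<^sub>R (b - a) \<in> ?S" by (auto simp: abs_mult intro: mult_left_le_one_le)
  next
    fix x assume "x \<in> ?S"
    show "(v has_derivative (\<lambda>h. h *\<^sub>R V x)) (at x within ?S)"
      using dv[of x] unfolding has_vector_derivative_def by (rule has_derivative_at_withinI)
  next
    fix x assume x: "x \<in> ?S"
    have e: "(\<lambda>h. h *\<^sub>R V x) - (\<lambda>h. h *\<^sub>R V a) = (\<lambda>h. h *\<^sub>R (V x - V a))"
      by (auto simp: fun_eq_iff scaleR_diff_right)
    have "onorm (\<lambda>h::real. h *\<^sub>R (V x - V a)) = onorm (\<lambda>h::real. h) * norm (V x - V a)"
      by (rule onorm_scaleR_left) (rule bounded_linear_ident)
    also have "\<dots> = norm (V x - V a)" by (simp add: onorm_id)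
    also have "\<dots> \<le> B" using B[of x a] x ab by auto
    finally show "onorm ((\<lambda>h. h *\<^sub>R V x) - (\<lambda>h. h *\<^sub>R V a)) \<le> B" unfolding e .
  next
    show "a \<in> ?S" by simp
  qed
  then show ?thesis by simp
qed

lemma vec_deriv:
  fixes v :: "real \<Rightarrow> complex^'l" and a b :: "'l \<Rightarrow> real"
  assumes ra: "\<And>i. ((\<lambda>y. Re (v y $ i)) has_real_derivative a i) (at y)"
    and ib: "\<And>i. ((\<lambda>y. Im (v y $ i)) has_real_derivative b i) (at y)"
  shows "(v has_vector_derivative (\<chi> i. Complex (a i) (b i))) (at y)"
  unfolding has_vector_derivative_def
proof (subst has_derivative_componentwise_within, intro ballI)
  fix e :: "complex^'l" assume "e \<in> Basis"
  then obtain i u where iu: "e = axis i u" "u \<in> Basis" by (auto simp: Basis_vec_def)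
  then have "u = 1 \<or> u = \<i>" by (auto simp: Basis_complex_def)
  then show "((\<lambda>x. v x \<bullet> e) has_derivative (\<lambda>x. x *\<^sub>R (\<chi> i. Complex (a i) (b i)) \<bullet> e)) (at y)"
  proof
    assume "u = 1"
    have "((\<lambda>y. Re (v y $ i)) has_derivative (\<lambda>x. x * a i)) (at y)"
    proof -
      have "(\<lambda>x. x * a i) = (*) (a i)" by (auto simp: fun_eq_iff)
      then show ?thesis using ra[of i] unfolding has_field_derivative_def by simp
    qed
    then show ?thesis using iu \<open>u = 1\<close> by (simp add: inner_axis)
  next
    assume "u = \<i>"
    have "((\<lambda>y. Im (v y $ i)) has_derivative (\<lambda>x. x * b i)) (at y)"
    proof -
      have "(\<lambda>x. x * b i) = (*) (b i)" by (auto simp: fun_eq_iff)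
      then show ?thesis using ib[of i] unfolding has_field_derivative_def by simp
    qed
    then show ?thesis using iu \<open>u = \<i>\<close> by (simp add: inner_axis)
  qed
qed

lemma vec_cont:
  fixes a b :: "'l::finite \<Rightarrow> real \<Rightarrow> real"
  assumes "\<And>i. continuous_on UNIV (a i)" "\<And>i. continuous_on UNIV (b i)"
  shows "continuous_on UNIV (\<lambda>y. (\<chi> i. Complex (a i y) (b i y)) :: complex^'l)"
  unfolding continuous_on_def
proof (intro ballI)
  fix y :: real
  have "((\<lambda>y. a i y) \<longlongrightarrow> a i y) (at y)" "((\<lambda>y. b i y) \<longlongrightarrow> b i y) (at y)" for i
    using assms by (auto simp: continuous_on_def)
  then have "((\<lambda>y. Complex (a i y) (b i y)) \<longlongrightarrow> Complex (a i y) (b i y)) (at y)" for i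
    by (intro tendsto_Complex)
  then show "((\<lambda>y. (\<chi> i. Complex (a i y) (b i y)) :: complex^'l) \<longlongrightarrow> (\<chi> i. Complex (a i y) (b i y))) (at y within UNIV)"
    by (intro tendsto_vec_lambda) simp
qed

lemma glob_bound:
  fixes F :: "real \<Rightarrow> 'a::real_normed_vector"
  assumes c: "continuous_on UNIV F" and z: "\<And>y. y \<notin> {0..t0} \<Longrightarrow> F y = 0"
  shows "\<exists>C\<ge>0. \<forall>y. norm (F y) \<le> C"
proof -
  have "compact (F ` {0..t0})" by (rule compact_continuous_image[OF continuous_on_subset[OF c]]) auto
  then obtain B where B: "\<forall>x\<in>F ` {0..t0}. norm x \<le> B" using compact_imp_bounded bounded_iff by metis
  show ?thesis
  proof (intro exI[of _ "max B 0"] conjI allI)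
    fix y show "norm (F y) \<le> max B 0"
    proof (cases "y \<in> {0..t0}")
      case True
      then have "norm (F y) \<le> B" using B by blast
      then show ?thesis by linarith
    next
      case False
      then show ?thesis using z[of y] by simp
    qed
  qed simp
qed

lemma cont_meas:
  fixes F :: "real \<Rightarrow> 'a::real_normed_vector"
  assumes c: "continuous_on UNIV F" and S: "S \<in> sets lebesgue"
  shows "F \<in> borel_measurable (lebesgue_on S)"
  by (rule continuous_imp_measurable_on_sets_lebesgue[OF continuous_on_subset[OF c subset_UNIV] S])

lemma memLp_shift:
  fixes F :: "real \<Rightarrow> 'a::{banach, second_countable_topology}"
  assumes p: "1 \<le> p" and t0: "0 < t0" and c: "continuous_on UNIV F"
    and z: "\<And>y. y \<notin> {0..t0} \<Longrightarrow> F y = 0" and t: "t \<le> t0"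
  shows "memLp p {0<..} (\<lambda>r. F (t - r))"
proof -
  obtain C where C: "0 \<le> C" "\<And>y. norm (F y) \<le> C" using glob_bound[OF c z] by blast
  have c2: "continuous_on UNIV (\<lambda>r. F (t - r))"
    by (rule continuous_on_compose2[OF c]) (auto intro!: continuous_intros)
  show ?thesis
  proof (rule Lp_bound_pos(1)[OF p t0 C(1)])
    show "(\<lambda>r. F (t - r)) \<in> borel_measurable (lebesgue_on {0<..})" by (rule cont_meas[OF c2]) auto
    show "norm (F (t - r)) \<le> C" for r by (rule C(2))
    show "F (t - r) = 0" if "t0 < r" for r using that t by (intro z) auto
  qed
qed

lemma restrM:
  fixes F :: "real \<Rightarrow> 'b::euclidean_space"
  assumes c: "continuous_on UNIV F" and M: "0 < M" and z: "\<And>r. M \<le> r \<Longrightarrow> F r = 0"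
  shows "integral\<^sup>L (lebesgue_on {0<..}) F = integral {0..M} F"
proof -
  have "integral\<^sup>L (lebesgue_on {0<..}) F = integral\<^sup>L (lebesgue_on {0<..}) (\<lambda>r. indicator {0<..<M} r *\<^sub>R F r)"
  proof (rule Bochner_Integration.integral_cong[OF refl])
    fix r assume "r \<in> space (lebesgue_on ({0<..} :: real set))"
    then have "0 < r" by (simp add: space_restrict_space)
    then show "F r = indicator {0<..<M} r *\<^sub>R F r" using z[of r] by (cases "r < M") auto
  qed
  also have "\<dots> = integral\<^sup>L (lebesgue_on {0<..<M}) F" by (rule restr_ind) auto
  also have "\<dots> = integral {0..M} F" by (rule bridge(2)) (rule continuous_on_subset[OF c subset_UNIV])
  finally show ?thesis .
qed

lemma weak_shift:
  fixes v V :: "real \<Rightarrow> 'a::euclidean_space"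
  assumes dv: "\<And>y. (v has_vector_derivative V y) (at y)" and cV: "continuous_on UNIV V"
    and tf: "test_fun {0<..} \<phi>"
  shows "integral\<^sup>L (lebesgue_on {0<..}) (\<lambda>r. deriv \<phi> r *\<^sub>R v (t - r))
     = - integral\<^sup>L (lebesgue_on {0<..}) (\<lambda>r. \<phi> r *\<^sub>R (- V (t - r)))"
proof -
  have sp: "smooth_fun \<phi>" using tf unfolding test_fun_def by blast
  have tp': "test_fun {0<..} (deriv \<phi>)" by (rule test_fun_deriv[OF tf])
  have b1: "bounded (closure {r. \<phi> r \<noteq> 0})" using tf unfolding test_fun_def by (blast intro: compact_imp_bounded)
  have b2: "bounded (closure {r. deriv \<phi> r \<noteq> 0})" using tp' unfolding test_fun_def by (blast intro: compact_imp_bounded)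
  obtain M1 where M1: "\<forall>x\<in>closure {r. \<phi> r \<noteq> 0} \<union> closure {r. deriv \<phi> r \<noteq> 0}. norm x \<le> M1"
    using bounded_Un[of "closure {r. \<phi> r \<noteq> 0}" "closure {r. deriv \<phi> r \<noteq> 0}"] b1 b2 bounded_iff by metis
  define M where "M = \<bar>M1\<bar> + 1"
  have M: "0 < M" by (simp add: M_def)
  have zM: "\<phi> r = 0" "deriv \<phi> r = 0" if "M \<le> r" for r
  proof -
    have "r \<notin> closure {r. \<phi> r \<noteq> 0}" "r \<notin> closure {r. deriv \<phi> r \<noteq> 0}" using M1 that by (force simp: M_def)+
    then show "\<phi> r = 0" "deriv \<phi> r = 0" using test_fun_zero by blast+
  qed
  have p0: "\<phi> 0 = 0" by (rule tf_out[OF tf]) simp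
  have cv: "continuous_on UNIV v"
    by (rule continuous_at_imp_continuous_on) (use dv has_vector_derivative_continuous in blast)
  have cp: "continuous_on UNIV \<phi>" by (rule smooth_cont[OF sp])
  have cp': "continuous_on UNIV (deriv \<phi>)" by (rule smooth_cont[OF smooth_deriv[OF sp]])
  have cvs: "continuous_on UNIV (\<lambda>r. v (t - r))"
    by (rule continuous_on_compose2[OF cv]) (auto intro!: continuous_intros)
  have cVs: "continuous_on UNIV (\<lambda>r. V (t - r))"
    by (rule continuous_on_compose2[OF cV]) (auto intro!: continuous_intros)
  have cA: "continuous_on UNIV (\<lambda>r. deriv \<phi> r *\<^sub>R v (t - r))" using cp' cvs by (intro continuous_intros)
  have cB: "continuous_on UNIV (\<lambda>r. \<phi> r *\<^sub>R (- V (t - r)))" using cp cVs by (intro continuous_intros)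
  have dh: "((\<lambda>r. \<phi> r *\<^sub>R v (t - r)) has_vector_derivative (\<phi> r *\<^sub>R (- V (t - r)) + deriv \<phi> r *\<^sub>R v (t - r))) (at r)" for r
  proof -
    have "((\<lambda>r. t - r) has_vector_derivative (-1)) (at r)"
      using has_real_derivative_iff_has_vector_derivative by (auto intro!: derivative_eq_intros)
    then have "(((\<lambda>y. v y) \<circ> (\<lambda>r. t - r)) has_vector_derivative ((-1) *\<^sub>R V (t - r))) (at r)"
      using dv[of "t - r"] by (rule vector_diff_chain_at)
    then have d1: "((\<lambda>r. v (t - r)) has_vector_derivative (- V (t - r))) (at r)" by (simp add: comp_def)
    show ?thesis using has_vector_derivative_scaleR[OF smooth_has_deriv[OF sp] d1] by simp
  qed
  have "((\<lambda>r. \<phi> r *\<^sub>R (- V (t - r)) + deriv \<phi> r *\<^sub>R v (t - r)) has_integral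
      (\<phi> M *\<^sub>R v (t - M) - \<phi> 0 *\<^sub>R v (t - 0))) {0..M}"
    by (rule fundamental_theorem_of_calculus) (use M dh in \<open>auto intro: has_vector_derivative_at_within\<close>)
  then have I0: "integral {0..M} (\<lambda>r. \<phi> r *\<^sub>R (- V (t - r)) + deriv \<phi> r *\<^sub>R v (t - r)) = 0"
    using zM[of M] p0 by (simp add: integral_unique)
  have "integral {0..M} (\<lambda>r. \<phi> r *\<^sub>R (- V (t - r)) + deriv \<phi> r *\<^sub>R v (t - r))
      = integral {0..M} (\<lambda>r. \<phi> r *\<^sub>R (- V (t - r))) + integral {0..M} (\<lambda>r. deriv \<phi> r *\<^sub>R v (t - r))"
    by (rule integral_add; rule integrable_continuous_interval; rule continuous_on_subset[OF _ subset_UNIV])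
       (use cA cB in auto)
  then have S: "integral {0..M} (\<lambda>r. deriv \<phi> r *\<^sub>R v (t - r)) = - integral {0..M} (\<lambda>r. \<phi> r *\<^sub>R (- V (t - r)))"
    using I0 by (simp add: add_eq_0_iff)
  have RA: "integral\<^sup>L (lebesgue_on {0<..}) (\<lambda>r. deriv \<phi> r *\<^sub>R v (t - r)) = integral {0..M} (\<lambda>r. deriv \<phi> r *\<^sub>R v (t - r))"
    by (rule restrM[OF cA M]) (simp add: zM)
  have RB: "integral\<^sup>L (lebesgue_on {0<..}) (\<lambda>r. \<phi> r *\<^sub>R (- V (t - r))) = integral {0..M} (\<lambda>r. \<phi> r *\<^sub>R (- V (t - r)))"
    by (rule restrM[OF cB M]) (simp add: zM)
  show ?thesis using S RA RB by simp
qed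

lemma mvdiff: "((A - B) *v w) $ j = (A *v w) $ j - (B *v w) $ j"
  for A B :: "'a::comm_ring_1^'n::finite^'m::finite"
  by (simp add: matrix_vector_mult_def left_diff_distrib sum_subtractf)

lemma AE_sub_Ioo:
  assumes "AE r in lebesgue_on {0<..}. P r"
  shows "AE r in lebesgue_on {0<..<(1::real)}. P r"
proof -
  have "AE r in lebesgue. r \<in> {0<..} \<longrightarrow> P r" using assms by (subst (asm) AE_restrict_space_iff) auto
  then have "AE r in lebesgue. r \<in> {0<..<1} \<longrightarrow> P r" by eventually_elim auto
  then show ?thesis by (subst AE_restrict_space_iff) auto
qed

theorem lemma2p8:
  fixes p t0 :: real and S :: "'l::finite set" and Pp Pm :: "complex^'l^'l"
    and u :: "real \<Rightarrow> complex^'l"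
  assumes "1 \<le> p"
    and "Pm = (\<chi> i j. if i = j \<and> i \<in> S then 1 else 0)"
    and "Pp + Pm = mat 1"
    and "t0 > 0"
    and "W2p0 p {0<..<t0} (rg Pm) u"
    and "continuous_on {0..t0} u"
  shows "classical_solution p Pp Pm t0 u (\<lambda>t r. ext0 t0 u (t - r))"
proof -
  note p = assms(1) and Pm = assms(2) and PP = assms(3) and t0 = assms(4) and W0 = assms(5) and cu = assms(6)
  let ?I = "{0<..<t0}"
  obtain u1 u2 \<psi> \<psi>1 \<psi>2 where AEV: "AE t in lebesgue_on ?I. u t \<in> rg Pm" and W: "W2p p ?I u u1 u2"
    and t\<psi>: "\<And>n. vec_test_fun ?I (\<psi> n)" and W\<psi>: "\<And>n. W2p p ?I (\<psi> n) (\<psi>1 n) (\<psi>2 n)"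
    and lim: "(\<lambda>n. Lp_norm p ?I (\<lambda>r. \<psi> n r - u r) + Lp_norm p ?I (\<lambda>r. \<psi>1 n r - u1 r)
                 + Lp_norm p ?I (\<lambda>r. \<psi>2 n r - u2 r)) \<longlonglongrightarrow> 0"
    using W0 unfolding W2p0_def by blast
  have comp: "P (u 0 $ i) = 0 \<and> P (u t0 $ i) = 0 \<and> (\<exists>G. continuous_on {0..t0} G \<and> G 0 = 0 \<and> G t0 = 0 \<and>
           (\<forall>y\<in>{0..t0}. ((\<lambda>r. P (u r $ i)) has_real_derivative G y) (at y within {0..t0})))"
    if "P = Re \<or> P = Im" for P i
    by (rule compC1[OF p t0 that W t\<psi> W\<psi> lim cu])
  have "\<forall>i. \<exists>G. continuous_on {0..t0} G \<and> G 0 = 0 \<and> G t0 = 0 \<and>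
           (\<forall>y\<in>{0..t0}. ((\<lambda>r. Re (u r $ i)) has_real_derivative G y) (at y within {0..t0}))"
    using comp[of Re] by blast
  then obtain Gr where Gr: "\<And>i. continuous_on {0..t0} (Gr i) \<and> Gr i 0 = 0 \<and> Gr i t0 = 0 \<and>
           (\<forall>y\<in>{0..t0}. ((\<lambda>r. Re (u r $ i)) has_real_derivative Gr i y) (at y within {0..t0}))"
    by metis
  have "\<forall>i. \<exists>G. continuous_on {0..t0} G \<and> G 0 = 0 \<and> G t0 = 0 \<and>
           (\<forall>y\<in>{0..t0}. ((\<lambda>r. Im (u r $ i)) has_real_derivative G y) (at y within {0..t0}))"
    using comp[of Im] by blast
  then obtain Gi where Gi: "\<And>i. continuous_on {0..t0} (Gi i) \<and> Gi i 0 = 0 \<and> Gi i t0 = 0 \<and>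
           (\<forall>y\<in>{0..t0}. ((\<lambda>r. Im (u r $ i)) has_real_derivative Gi i y) (at y within {0..t0}))"
    by metis
  have u0: "Re (u 0 $ i) = 0" "Re (u t0 $ i) = 0" "Im (u 0 $ i) = 0" "Im (u t0 $ i) = 0" for i
    using comp[of Re i] comp[of Im i] by auto
  define v where "v = ext0 t0 u"
  define V where "V y = (\<chi> i. Complex (ext0 t0 (Gr i) y) (ext0 t0 (Gi i) y))" for y
  have vRe: "(\<lambda>y. Re (v y $ i)) = ext0 t0 (\<lambda>r. Re (u r $ i))" for i by (auto simp: v_def ext0_def fun_eq_iff)
  have vIm: "(\<lambda>y. Im (v y $ i)) = ext0 t0 (\<lambda>r. Im (u r $ i))" for i by (auto simp: v_def ext0_def fun_eq_iff)
  have dRe: "((\<lambda>y. Re (v y $ i)) has_real_derivative ext0 t0 (Gr i) y) (at y)" for i y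
    unfolding vRe by (rule ext_deriv(1)[OF t0, where z = "\<lambda>r. Re (u r $ i)" and G = "Gr i"]) (use Gr[of i] u0 in auto)
  have dIm: "((\<lambda>y. Im (v y $ i)) has_real_derivative ext0 t0 (Gi i) y) (at y)" for i y
    unfolding vIm by (rule ext_deriv(1)[OF t0, where z = "\<lambda>r. Im (u r $ i)" and G = "Gi i"]) (use Gi[of i] u0 in auto)
  have cGr: "continuous_on UNIV (ext0 t0 (Gr i))" for i
    by (rule ext_deriv(2)[OF t0, where z = "\<lambda>r. Re (u r $ i)" and G = "Gr i"]) (use Gr[of i] u0 in auto)
  have cGi: "continuous_on UNIV (ext0 t0 (Gi i))" for i
    by (rule ext_deriv(2)[OF t0, where z = "\<lambda>r. Im (u r $ i)" and G = "Gi i"]) (use Gi[of i] u0 in auto)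
  have dv: "(v has_vector_derivative V y) (at y)" for y
    unfolding V_def by (rule vec_deriv[OF dRe dIm])
  have cV: "continuous_on UNIV V"
    unfolding V_def[abs_def] by (rule vec_cont[OF cGr cGi])
  have Vz: "V y = 0" if "y \<notin> {0..t0}" for y
  proof -
    have "\<not> (0 \<le> y \<and> y \<le> t0)" using that by auto
    then show ?thesis by (auto simp: V_def ext0_def vec_eq_iff complex_eq_iff)
  qed
  have vz: "v y = 0" if "y \<notin> {0..t0}" for y
    using that by (auto simp: v_def ext0_def)
  have cv: "continuous_on UNIV v"
    by (rule continuous_at_imp_continuous_on) (use dv has_vector_derivative_continuous in blast)

  have Pmv: "(Pm *v w) $ j = (if j \<in> S then w $ j else 0)" for w :: "complex^'l" and j
  proof -
    have "(Pm *v w) $ j = (\<Sum>k\<in>UNIV. (if j = k \<and> j \<in> S then 1 else 0) * w $ k)"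
      by (simp add: matrix_vector_mult_def Pm)
    also have "\<dots> = (\<Sum>k\<in>UNIV. (if k = j then (if j \<in> S then w $ j else 0) else 0))"
      by (rule sum.cong) auto
    also have "\<dots> = (if j \<in> S then w $ j else 0)" by simp
    finally show ?thesis .
  qed
  have rgc: "w \<in> rg Pm \<longleftrightarrow> (\<forall>j. j \<notin> S \<longrightarrow> w $ j = 0)" for w :: "complex^'l"
    by (auto simp: rg_def vec_eq_iff Pmv)
  have Ppe: "Pp = mat 1 - Pm" using PP by (metis add_diff_cancel_right')
  have PPv: "((Pp - Pm) *v w) $ j = (if j \<in> S then - w $ j else w $ j)" for w :: "complex^'l" and j
    unfolding Ppe by (simp only: mvdiff matrix_vector_mul_lid Pmv) auto
  have uS: "u t $ j = 0" if t: "t \<in> {0..t0}" and j: "j \<notin> S" for t j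
  proof -
    have ae: "AE t in lebesgue_on ?I. Re (u t $ j) = 0 \<and> Im (u t $ j) = 0"
      using AEV by eventually_elim (use j rgc in auto)
    have "AE t in lebesgue_on ?I. Re (u t $ j) = 0" using ae by eventually_elim auto
    then have "\<forall>t\<in>{0..t0}. Re (u t $ j) = 0"
      by (rule cont_ae_zero[OF t0, rotated]) (intro continuous_intros bounded_linear.continuous_on[OF bounded_linear_vec_nth cu])
    moreover have "AE t in lebesgue_on ?I. Im (u t $ j) = 0" using ae by eventually_elim auto
    then have "\<forall>t\<in>{0..t0}. Im (u t $ j) = 0"
      by (rule cont_ae_zero[OF t0, rotated]) (intro continuous_intros bounded_linear.continuous_on[OF bounded_linear_vec_nth cu])
    ultimately show ?thesis using t by (simp add: complex_eq_iff)
  qed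
  have uR: "Pm *v u t = u t" if "t \<in> {0..t0}" for t
    using uS[OF that] rgc[of "u t"] rg_def by auto
  have VS: "V y $ j = 0" if j: "j \<notin> S" for y j
  proof -
    have z1: "(\<lambda>y. Re (v y $ j)) = (\<lambda>_. 0)" by (auto simp: v_def ext0_def uS[OF _ j] fun_eq_iff)
    have z2: "(\<lambda>y. Im (v y $ j)) = (\<lambda>_. 0)" by (auto simp: v_def ext0_def uS[OF _ j] fun_eq_iff)
    have "ext0 t0 (Gr j) y = 0" using DERIV_unique[OF dRe[of j y, unfolded z1] DERIV_const] .
    moreover have "ext0 t0 (Gi j) y = 0" using DERIV_unique[OF dIm[of j y, unfolded z2] DERIV_const] .
    ultimately show ?thesis by (simp add: V_def complex_eq_iff)
  qed
  have AV: "(Pp - Pm) *v (- V y) = V y" for y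
    by (auto simp: vec_eq_iff PPv VS)

  define K where "K = t0 powr (1/p)"
  have K: "0 < K" using t0 by (simp add: K_def)
  have Vshift_lim: "((\<lambda>s. Lp_norm p {0<..} (\<lambda>r. V (s - r) - V (t - r))) \<longlongrightarrow> 0) (at t within {0..t0})"
    if t: "t \<in> {0..t0}" for t
    unfolding Lim_within
  proof (intro allI impI)
    fix e :: real assume e: "0 < e"
    have e': "0 < e / (2 * K)" using e K by simp
    obtain d where d: "0 < d" "\<And>a b. \<bar>a - b\<bar> < d \<Longrightarrow> norm (V a - V b) < e / (2 * K)"
      using uc_V[OF cV Vz e'] by blast
    show "\<exists>d>0. \<forall>s\<in>{0..t0}. 0 < dist s t \<and> dist s t < d \<longrightarrow>
        dist (Lp_norm p {0<..} (\<lambda>r. V (s - r) - V (t - r))) 0 < e"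
    proof (intro exI[of _ d] conjI ballI impI)
      show "0 < d" by (rule d(1))
      fix s assume s: "s \<in> {0..t0}" and ds: "0 < dist s t \<and> dist s t < d"
      have cs: "continuous_on UNIV (\<lambda>r. V (s - r) - V (t - r))"
        by (intro continuous_intros continuous_on_compose2[OF cV]) auto
      have "Lp_norm p {0<..} (\<lambda>r. V (s - r) - V (t - r)) \<le> e / (2 * K) * t0 powr (1/p)"
      proof (rule Lp_bound_pos(2)[OF p t0])
        show "0 \<le> e / (2 * K)" using e' by simp
        show "(\<lambda>r. V (s - r) - V (t - r)) \<in> borel_measurable (lebesgue_on {0<..})"
          by (rule cont_meas[OF cs]) auto
        fix r
        show "norm (V (s - r) - V (t - r)) \<le> e / (2 * K)"
          using d(2)[of "s - r" "t - r"] ds by (simp add: dist_real_def)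
        show "V (s - r) - V (t - r) = 0" if "t0 < r" using that s t Vz by auto
      qed
      also have "\<dots> = e / 2" using K unfolding K_def by simp
      finally have le: "Lp_norm p {0<..} (\<lambda>r. V (s - r) - V (t - r)) \<le> e / 2" .
      have n0: "0 \<le> Lp_norm p {0<..} (\<lambda>r. V (s - r) - V (t - r))" by (rule Lp_norm_nonneg)
      have "dist (Lp_norm p {0<..} (\<lambda>r. V (s - r) - V (t - r))) 0 = Lp_norm p {0<..} (\<lambda>r. V (s - r) - V (t - r))"
        using n0 by (simp add: dist_real_def)
      then show "dist (Lp_norm p {0<..} (\<lambda>r. V (s - r) - V (t - r))) 0 < e" using le e by linarith
    qed
  qed
  have vquot_lim: "((\<lambda>s. Lp_norm p {0<..} (\<lambda>r. v (s - r) - v (t - r) - (s - t) *\<^sub>R V (t - r)) / \<bar>s - t\<bar>) \<longlongrightarrow> 0)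
        (at t within {0..t0})" if t: "t \<in> {0..t0}" for t
    unfolding Lim_within
  proof (intro allI impI)
    fix e :: real assume e: "0 < e"
    have e': "0 < e / (2 * K)" using e K by simp
    obtain d where d: "0 < d" "\<And>a b. \<bar>a - b\<bar> < d \<Longrightarrow> norm (V a - V b) < e / (2 * K)"
      using uc_V[OF cV Vz e'] by blast
    show "\<exists>d>0. \<forall>s\<in>{0..t0}. 0 < dist s t \<and> dist s t < d \<longrightarrow>
        dist (Lp_norm p {0<..} (\<lambda>r. v (s - r) - v (t - r) - (s - t) *\<^sub>R V (t - r)) / \<bar>s - t\<bar>) 0 < e"
    proof (intro exI[of _ d] conjI ballI impI)
      show "0 < d" by (rule d(1))
      fix s assume s: "s \<in> {0..t0}" and ds: "0 < dist s t \<and> dist s t < d"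
      have st: "0 < \<bar>s - t\<bar>" "\<bar>s - t\<bar> < d" using ds by (auto simp: dist_real_def)
      have cs: "continuous_on UNIV (\<lambda>r. v (s - r) - v (t - r) - (s - t) *\<^sub>R V (t - r))"
        by (intro continuous_intros continuous_on_compose2[OF cV] continuous_on_compose2[OF cv]) auto
      have B: "norm (V y - V y') \<le> e / (2 * K)" if "\<bar>y - y'\<bar> \<le> \<bar>s - t\<bar>" for y y'
        using d(2)[of y y'] that st by auto
      have "Lp_norm p {0<..} (\<lambda>r. v (s - r) - v (t - r) - (s - t) *\<^sub>R V (t - r)) \<le> (\<bar>s - t\<bar> * (e / (2 * K))) * t0 powr (1/p)"
      proof (rule Lp_bound_pos(2)[OF p t0])
        show "0 \<le> \<bar>s - t\<bar> * (e / (2 * K))" using e' by (intro mult_nonneg_nonneg) auto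
        show "(\<lambda>r. v (s - r) - v (t - r) - (s - t) *\<^sub>R V (t - r)) \<in> borel_measurable (lebesgue_on {0<..})"
          by (rule cont_meas[OF cs]) auto
        fix r
        have "norm (v (s - r) - v (t - r) - ((s - r) - (t - r)) *\<^sub>R V (t - r)) \<le> \<bar>(s - r) - (t - r)\<bar> * (e / (2 * K))"
          by (rule lin_bound[OF dv B]) auto
        then show "norm (v (s - r) - v (t - r) - (s - t) *\<^sub>R V (t - r)) \<le> \<bar>s - t\<bar> * (e / (2 * K))" by simp
        show "v (s - r) - v (t - r) - (s - t) *\<^sub>R V (t - r) = 0" if "t0 < r" using that s t Vz vz by auto
      qed
      then have le: "Lp_norm p {0<..} (\<lambda>r. v (s - r) - v (t - r) - (s - t) *\<^sub>R V (t - r)) / \<bar>s - t\<bar> \<le> e / 2"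
        using st K unfolding K_def by (simp add: divide_le_eq field_simps)
      define q where "q = Lp_norm p {0<..} (\<lambda>r. v (s - r) - v (t - r) - (s - t) *\<^sub>R V (t - r)) / \<bar>s - t\<bar>"
      have n0: "0 \<le> q" unfolding q_def by (intro divide_nonneg_nonneg Lp_norm_nonneg) simp
      have "dist q 0 = q" using n0 by (simp add: dist_real_def)
      then have "dist q 0 < e" using le e unfolding q_def[symmetric] by linarith
      then show "dist (Lp_norm p {0<..} (\<lambda>r. v (s - r) - v (t - r) - (s - t) *\<^sub>R V (t - r)) / \<bar>s - t\<bar>) 0 < e"
        unfolding q_def .
    qed
  qed
  have trace: "trace0 (\<lambda>r. v (t - r)) = u t" if t: "t \<in> {0..t0}" for t
  proof -
    have "trace0 (\<lambda>r. v (t - r)) = v t"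
      unfolding trace0_def
    proof (rule the_equality)
      have "continuous_on {0..} (\<lambda>r. v (t - r))"
        by (rule continuous_on_compose2[OF cv]) (auto intro!: continuous_intros)
      then show "\<exists>h. continuous_on {0..} h \<and> (AE r in lebesgue_on {0<..}. v (t - r) = h r) \<and> h 0 = v t"
        by (intro exI[of _ "\<lambda>r. v (t - r)"]) auto
    next
      fix c assume "\<exists>h. continuous_on {0..} h \<and> (AE r in lebesgue_on {0<..}. v (t - r) = h r) \<and> h 0 = c"
      then obtain h where h: "continuous_on {0..} h" "AE r in lebesgue_on {0<..}. v (t - r) = h r" "h 0 = c"
        by blast
      have "AE r in lebesgue_on {0<..<1}. v (t - r) - h r = 0"
        using AE_sub_Ioo[OF h(2)] by eventually_elim auto
      moreover have "continuous_on {0..1} (\<lambda>r. v (t - r) - h r)"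
        by (intro continuous_intros continuous_on_compose2[OF cv] continuous_on_subset[OF h(1)]) auto
      ultimately have "\<forall>r\<in>{0..1}. v (t - r) - h r = 0" by (intro cont_ae_zero) auto
      then show "c = v t" using h(3) by force
    qed
    also have "v t = u t" using t by (simp add: v_def ext0_def)
    finally show ?thesis .
  qed

  show ?thesis
    unfolding classical_solution_def v_def[symmetric]
  proof (rule exI[of _ "\<lambda>t r. V (t - r)"], rule exI[of _ "\<lambda>t r. - V (t - r)"], intro conjI ballI)
    fix t :: real assume t: "t \<in> {0..t0}"
    show "memLp p {0<..} (\<lambda>r. v (t - r))" by (rule memLp_shift[OF p t0 cv vz]) (use t in auto)
    show "memLp p {0<..} (\<lambda>r. V (t - r))" by (rule memLp_shift[OF p t0 cV Vz]) (use t in auto)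
    show "((\<lambda>s. Lp_norm p {0<..} (\<lambda>r. v (s - r) - v (t - r) - (s - t) *\<^sub>R V (t - r)) / \<bar>s - t\<bar>) \<longlongrightarrow> 0)
        (at t within {0..t0})" by (rule vquot_lim[OF t])
    show "((\<lambda>s. Lp_norm p {0<..} (\<lambda>r. V (s - r) - V (t - r))) \<longlongrightarrow> 0) (at t within {0..t0})"
      by (rule Vshift_lim[OF t])
    have m1: "memLp p {0<..} (\<lambda>r. v (t - r))" by (rule memLp_shift[OF p t0 cv vz]) (use t in auto)
    have cmV: "continuous_on UNIV (\<lambda>y. - V y)" using cV by (intro continuous_intros)
    have m2: "memLp p {0<..} (\<lambda>r. - V (t - r))"
      by (rule memLp_shift[OF p t0 cmV, where t = t]) (use t Vz in auto)
    have wk: "\<forall>\<phi>. test_fun {0<..} \<phi> \<longrightarrow> integral\<^sup>L (lebesgue_on {0<..}) (\<lambda>r. deriv \<phi> r *\<^sub>R v (t - r))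
          = - integral\<^sup>L (lebesgue_on {0<..}) (\<lambda>r. \<phi> r *\<^sub>R - V (t - r))"
      by (intro allI impI, rule weak_shift[OF dv cV])
    show "W1p p {0<..} (\<lambda>r. v (t - r)) (\<lambda>r. - V (t - r))"
      unfolding W1p_def weak_deriv_on_def using m1 m2 wk by blast
    show "((\<lambda>s. Lp_norm p {0<..} (\<lambda>r. (Pp - Pm) *v - V (s - r) - (Pp - Pm) *v - V (t - r))) \<longlongrightarrow> 0)
        (at t within {0..t0})"
      unfolding AV by (rule Vshift_lim[OF t])
    show "AE r in lebesgue_on {0<..}. V (t - r) = (Pp - Pm) *v - V (t - r)"
      by (rule AE_I2) (simp add: AV)
    show "Pm *v trace0 (\<lambda>r. v (t - r)) = u t" using trace[OF t] uR[OF t] by simp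
  next
    show "AE r in lebesgue_on {0<..}. v (0 - r) = 0"
      by (rule AE_I2) (auto simp: space_restrict_space intro!: vz)
  qed
qed

end
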